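(* Let $N_r\ge N_t\ge 2$, let $\mathbf{H}\in\mathbb{C}^{N_r\times N_t}$, and let $E_s,N_0>0$. Form the augmented matrix $$\mathbf{H}_{\mathrm a}=\begin{bmatrix}\tfrac{1}{\sqrt{N_0}}\mathbf{H}\\ \tfrac{1}{\sqrt{E_s}}\mathbf{I}_{N_t}\end{bmatrix}\in\mathbb{C}^{(N_r+N_t)\times N_t}$$ and let $\mathbf{H}_{\mathrm a}=\mathbf{Q}_{\mathrm a}\mathbf{L}_{\mathrm a}$ be its thin QL decomposition. Fix $1\le\nu\le N_t-1$ and partition $$\mathbf{L}_{\mathrm a}=\begin{bmatrix}\mathbf{P}_{\mathrm a}&\mathbf{0}\\ \mathbf{R}_{\mathrm a}&\mathbf{S}_{\mathrm a}\end{bmatrix},$$ with $\mathbf{P}_{\mathrm a}\in\mathbb{C}^{\nu\times\nu}$ and $\mathbf{S}_{\mathrm a}\in\mathbb{C}^{(N_t-\nu)\times(N_t-\nu)}$. Define $$\boldsymbol{\Sigma}_{\mathrm a}=\operatorname{diag}(\mathbf{S}_{\mathrm a}^{-1}\mathbf{S}_{\mathrm a}^{-\dagger})^{-1/2},\qquad \mathbf{W}_{\mathrm{ap}}=\begin{bmatrix}\mathbf{I}_\nu&\mathbf{0}\\ \mathbf{0}&\boldsymbol{\Sigma}_{\mathrm a}\mathbf{S}_{\mathrm a}^{-1}\end{bmatrix},\qquad \mathbf{L}_{\mathrm{ap}}=\mathbf{W}_{\mathrm{ap}}\mathbf{L}_{\mathrm a}.$$ Let $\alpha=N_0/E_s$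 and $$\mathbf{W}_{\mathrm{MMSE}}=(\mathbf{H}^\dagger\mathbf{H}+\alpha\mathbf{I}_{N_t})^{-1}\mathbf{H}^\dagger,\qquad \mathbf{G}_{\mathrm{ap}}=\mathbf{L}_{\mathrm{ap}}^\dagger\mathbf{L}_{\mathrm{ap}},\qquad \mathbf{F}_{\mathrm{ap}}=\mathbf{W}_{\mathrm{MMSE}}^\dagger\mathbf{G}_{\mathrm{ap}}.$$ Define the detection model $$p_{\mathrm{ap}}(\mathbf{y}|\mathbf{x})=\exp\big(2\,\mathrm{Re}\{\mathbf{y}^\dagger\mathbf{F}_{\mathrm{ap}}\mathbf{x}\}-\mathbf{x}^\dagger\mathbf{G}_{\mathrm{ap}}\mathbf{x}+\tfrac{1}{E_s}\mathbf{x}^\dagger\mathbf{x}\big)$$ together with $$p_{\mathrm{ap}}(\mathbf{y})=\int_{\mathbb{C}^{N_t}}p_{\mathrm{ap}}(\mathbf{y}|\mathbf{x})\,p(\mathbf{x})\,d\mathbf{x}.$$ Assume $\mathbf{x}\sim\mathcal{CN}(\mathbf{0},E_s\mathbf{I}_{N_t})$ with density $p(\mathbf{x})$, and let $\mathbf{y}=\mathbf{H}\mathbf{x}+\mathbf{z}$ with $\mathbf{z}\sim\mathcal{CN}(\mathbf{0},N_0\mathbf{I}_{N_r})$ independent of $\mathbf{x}$. Then the lower bound on the achievable information rate of the augmented WLD detector, $$I_{\mathrm{LB}}^{\mathrm{AWLD}}=\mathbb{E}_{\mathbf{Y},\mathbf{X}}[\log p_{\mathrm{ap}}(\mathbf{y}|\mathbf{x})]-\mathbb{E}_{\mathbf{Y}}[\log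 p_{\mathrm{ap}}(\mathbf{y})],$$ in which the expectations are taken with respect to the true joint distribution of $(\mathbf{x},\mathbf{y})$, equals $$I_{\mathrm{LB}}^{\mathrm{AWLD}}=N_t\log E_s+\log\det\big(\mathbf{L}_{\mathrm{ap}}^\dagger\mathbf{L}_{\mathrm{ap}}\big).$$
   Context: The thin QL decomposition $\mathbf{H}_{\mathrm a}=\mathbf{Q}_{\mathrm a}\mathbf{L}_{\mathrm a}$ means that $\mathbf{Q}_{\mathrm a}\in\mathbb{C}^{(N_r+N_t)\times N_t}$ has orthonormal columns and $\mathbf{L}_{\mathrm a}\in\mathbb{C}^{N_t\times N_t}$ is lower triangular with real positive diagonal entries. Such a decomposition exists since $\mathbf{H}_{\mathrm a}$ always has full column rank. For a square matrix $\mathbf{A}$, $\operatorname{diag}(\mathbf{A})$ denotes the diagonal matrix having the same diagonal entries as $\mathbf{A}$. The superscript $\dagger$ denotes conjugate transpose, and $\log$ is the natural logarithm. *)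

theory Defs
  imports "HOL-Analysis.Analysis"
    "Jordan_Normal_Form.Schur_Decomposition"
    "Jordan_Normal_Form.Gauss_Jordan_Elimination"
begin

text \<open>Vectors in C^n are represented, for integration, as functions nat => complex
  on the index set {..<n}, with the Lebesgue measure on C^n given by the product
  of the Lebesgue (Borel) measures on C = R^2.\<close>

definition cvec_measure :: "nat \<Rightarrow> (nat \<Rightarrow> complex) measure" where
  "cvec_measure n = PiM {..<n} (\<lambda>_. (lborel :: complex measure))"

definition cgauss_density :: "nat \<Rightarrow> real \<Rightarrow> (nat \<Rightarrow> complex) \<Rightarrow> real" where
  "cgauss_density n s f = exp (- (\<Sum>i<n. (cmod (f i))\<^sup>2) / s) / (pi * s) ^ n"

definition minv :: "complex mat \<Rightarrow> complex mat" where
  "minv A = the (mat_inverse A)"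

definition aug_mat :: "complex mat \<Rightarrow> real \<Rightarrow> real \<Rightarrow> nat \<Rightarrow> nat \<Rightarrow> complex mat" where
  "aug_mat H N0 Es nr nt = mat (nr + nt) nt (\<lambda>(i,j).
     if i < nr then H $$ (i,j) / complex_of_real (sqrt N0)
     else if i - nr = j then 1 / complex_of_real (sqrt Es) else 0)"

definition lr_block :: "complex mat \<Rightarrow> nat \<Rightarrow> nat \<Rightarrow> complex mat" where
  "lr_block L nt \<nu> = mat (nt - \<nu>) (nt - \<nu>) (\<lambda>(i,j). L $$ (i + \<nu>, j + \<nu>))"

text \<open>Sigma_a = diag(S^{-1} S^{-dagger})^{-1/2}; the diagonal entries of
  S^{-1} S^{-dagger} are positive reals.\<close>
definition Sigma_a :: "complex mat \<Rightarrow> complex mat" where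
  "Sigma_a S = (let M = minv S * mat_adjoint (minv S) in
     mat (dim_row S) (dim_row S) (\<lambda>(i,j).
       if i = j then complex_of_real (1 / sqrt (Re (M $$ (i,i)))) else 0))"

definition W_ap :: "complex mat \<Rightarrow> nat \<Rightarrow> nat \<Rightarrow> complex mat" where
  "W_ap L nt \<nu> = (let S = lr_block L nt \<nu> in
     four_block_mat (1\<^sub>m \<nu>) (0\<^sub>m \<nu> (nt - \<nu>)) (0\<^sub>m (nt - \<nu>) \<nu>) (Sigma_a S * minv S))"

definition L_ap :: "complex mat \<Rightarrow> nat \<Rightarrow> nat \<Rightarrow> complex mat" where
  "L_ap L nt \<nu> = W_ap L nt \<nu> * L"

definition W_MMSE :: "complex mat \<Rightarrow> real \<Rightarrow> nat \<Rightarrow> complex mat" where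
  "W_MMSE H \<alpha> nt = minv (mat_adjoint H * H + complex_of_real \<alpha> \<cdot>\<^sub>m 1\<^sub>m nt) * mat_adjoint H"

text \<open>p_ap(y|x) = exp(2 Re{y^dagger F x} - x^dagger G x + x^dagger x / Es)
  (the exponent is real; x^dagger G x and x^dagger x are real since G is Hermitian).\<close>
definition p_ap_cond :: "complex mat \<Rightarrow> complex mat \<Rightarrow> real \<Rightarrow> complex vec \<Rightarrow> complex vec \<Rightarrow> real" where
  "p_ap_cond F G Es y x = exp (2 * Re (conjugate y \<bullet> (F *\<^sub>v x))
      - Re (conjugate x \<bullet> (G *\<^sub>v x)) + Re (conjugate x \<bullet> x) / Es)"

definition p_ap_marg :: "complex mat \<Rightarrow> complex mat \<Rightarrow> real \<Rightarrow> nat \<Rightarrow> complex vec \<Rightarrow> real" where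
  "p_ap_marg F G Es nt y =
     (\<integral>x. p_ap_cond F G Es y (vec nt x) * cgauss_density nt Es x \<partial>cvec_measure nt)"

end

theory Submission
  imports Defs "HOL-Probability.Distributions"
begin


lemma lborel_complex_PiM:
  "(lborel :: complex measure) = distr (\<Pi>\<^sub>M b\<in>Basis. lborel) borel (\<lambda>f. \<Sum>b\<in>Basis. f b *\<^sub>R b)"
  by (rule lborel_eq)

interpretation cplx_basis_prod: product_sigma_finite "\<lambda>_::complex. (lborel::real measure)"
  by (simp add: product_sigma_finite_def lborel.sigma_finite_measure_axioms)

lemma inner_sum_Basis_complex:
  assumes "b \<in> (Basis :: complex set)"
  shows "inner (\<Sum>b'\<in>Basis. f b' *\<^sub>R b') b = f b"
  using assms by (simp add: inner_sum_left inner_Basis if_distrib cong: if_cong)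

lemma cplx_prod_integral:
  fixes h :: "complex \<Rightarrow> real \<Rightarrow> complex"
  assumes int: "\<And>b. b \<in> Basis \<Longrightarrow> integrable lborel (h b)"
  shows "integrable lborel (\<lambda>w::complex. \<Prod>b\<in>Basis. h b (inner w b))"
    and "(\<integral>w. (\<Prod>b\<in>Basis. h b (inner w b)) \<partial>(lborel::complex measure)) = (\<Prod>b\<in>Basis. integral\<^sup>L lborel (h b))"
proof -
  let ?T = "\<lambda>f::complex\<Rightarrow>real. \<Sum>b\<in>Basis. f b *\<^sub>R b"
  have T: "?T \<in> measurable (\<Pi>\<^sub>M b\<in>Basis. lborel) borel" by measurable
  have meas: "(\<lambda>w::complex. \<Prod>b\<in>Basis. h b (inner w b)) \<in> borel_measurable borel"
    using int by measurable
  have eq: "\<And>f. f \<in> space (\<Pi>\<^sub>M b\<in>Basis. lborel) \<Longrightarrow> (\<Prod>b\<in>Basis. h b (inner (?T f) b)) = (\<Prod>b\<in>Basis. h b (f b))"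
    by (intro prod.cong refl) (simp add: inner_sum_Basis_complex)
  have pi: "integrable (\<Pi>\<^sub>M b\<in>Basis. lborel) (\<lambda>f. \<Prod>b\<in>Basis. h b (f b))"
    using int by (intro cplx_basis_prod.product_integrable_prod) auto
  have pi': "integrable (\<Pi>\<^sub>M b\<in>Basis. lborel) (\<lambda>f. \<Prod>b\<in>Basis. h b (inner (?T f) b))"
    by (subst Bochner_Integration.integrable_cong[where g="\<lambda>f. \<Prod>b\<in>Basis. h b (f b)", OF refl eq]) (use pi in auto)
  show "integrable lborel (\<lambda>w::complex. \<Prod>b\<in>Basis. h b (inner w b))"
    apply (subst lborel_complex_PiM)
    apply (subst integrable_distr_eq[OF T])
    using meas apply simp
    using pi' by simp
  have "(\<integral>w. (\<Prod>b\<in>Basis. h b (inner w b)) \<partial>(lborel::complex measure))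
      = (\<integral>f. (\<Prod>b\<in>Basis. h b (inner (?T f) b)) \<partial>(\<Pi>\<^sub>M b\<in>Basis. lborel))"
    apply (subst lborel_complex_PiM)
    apply (subst integral_distr[OF T])
    using meas apply simp
    by simp
  also have "\<dots> = (\<integral>f. (\<Prod>b\<in>Basis. h b (f b)) \<partial>(\<Pi>\<^sub>M b\<in>Basis. lborel))"
    by (rule Bochner_Integration.integral_cong[OF refl eq])
  also have "\<dots> = (\<Prod>b\<in>Basis. integral\<^sup>L lborel (h b))"
    using int by (intro cplx_basis_prod.product_integral_prod) auto
  finally show "(\<integral>w. (\<Prod>b\<in>Basis. h b (inner w b)) \<partial>(lborel::complex measure)) = (\<Prod>b\<in>Basis. integral\<^sup>L lborel (h b))" .
qed

lemma cplx_prod2: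
  fixes f1 f2 :: "real \<Rightarrow> complex"
  assumes "integrable lborel f1" "integrable lborel f2"
  shows "integrable lborel (\<lambda>w::complex. f1 (Re w) * f2 (Im w))"
    and "(\<integral>w. f1 (Re w) * f2 (Im w) \<partial>lborel) = integral\<^sup>L lborel f1 * integral\<^sup>L lborel f2"
proof -
  define h where "h b = (if b = 1 then f1 else f2)" for b :: complex
  have i: "\<And>b. b \<in> Basis \<Longrightarrow> integrable lborel (h b)" using assms by (auto simp: h_def)
  have e: "(\<Prod>b\<in>Basis. h b (inner w b)) = f1 (Re w) * f2 (Im w)" for w
    by (simp add: Basis_complex_def h_def inner_complex_def)
  have e2: "(\<Prod>b\<in>Basis. integral\<^sup>L lborel (h b)) = integral\<^sup>L lborel f1 * integral\<^sup>L lborel f2"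
    by (simp add: Basis_complex_def h_def)
  show "integrable lborel (\<lambda>w::complex. f1 (Re w) * f2 (Im w))"
    using cplx_prod_integral(1)[of h, OF i] unfolding e .
  show "(\<integral>w. f1 (Re w) * f2 (Im w) \<partial>lborel) = integral\<^sup>L lborel f1 * integral\<^sup>L lborel f2"
    using cplx_prod_integral(2)[of h, OF i] unfolding e e2 .
qed

definition phi :: "real \<Rightarrow> complex \<Rightarrow> real" where
  "phi s w = exp (- (cmod w)\<^sup>2 / s) / (pi * s)"

lemma phi_split:
  assumes s: "s > 0"
  shows "phi s w = normal_density 0 (sqrt (s/2)) (Re w) * normal_density 0 (sqrt (s/2)) (Im w)"
proof -
  have sq: "(sqrt (s/2))\<^sup>2 = s/2" using s by simp
  have "phi s w = exp (- (Re w)\<^sup>2 / s) * exp (- (Im w)\<^sup>2 / s) / (pi * s)"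
    unfolding phi_def cmod_power2 by (simp add: exp_add[symmetric] diff_divide_distrib add_divide_distrib)
  also have "\<dots> = normal_density 0 (sqrt (s/2)) (Re w) * normal_density 0 (sqrt (s/2)) (Im w)"
    unfolding normal_density_def sq using s
    by (simp add: real_sqrt_mult[symmetric] field_simps)
  finally show ?thesis .
qed

context fixes s :: real assumes s: "s > 0"
begin

abbreviation "nd \<equiv> normal_density 0 (sqrt (s/2))"

lemma sig_pos: "sqrt (s/2) > 0" using s by simp

lemma nd_int: "integrable lborel (\<lambda>x. complex_of_real (nd x))"
  by (intro integrable_of_real integrable_normal_density[OF sig_pos])

lemma nd_int1: "integrable lborel (\<lambda>x. complex_of_real (x * nd x))"
  using integrable_normal_moment_nz_1[OF sig_pos, of 0]
  by (intro integrable_of_real) (simp add: mult.commute)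

lemma nd_int2: "integrable lborel (\<lambda>x. complex_of_real (x\<^sup>2 * nd x))"
  using integrable_normal_moment[OF sig_pos, of 0 2]
  by (intro integrable_of_real) (simp add: mult.commute)

lemma nd_I0: "(\<integral>x. complex_of_real (nd x) \<partial>lborel) = 1"
  using integral_normal_density[OF sig_pos] by simp

lemma nd_I1: "(\<integral>x. complex_of_real (x * nd x) \<partial>lborel) = 0"
  unfolding integral_complex_of_real using integral_normal_moment_nz_1[OF sig_pos, of 0] by (simp add: mult.commute)

lemma nd_I2: "(\<integral>x. complex_of_real (x\<^sup>2 * nd x) \<partial>lborel) = s/2"
proof -
  have "(\<integral>x. nd x * (x - 0)^(2*1) \<partial>lborel) = fact (2 * 1) / ((2 / (sqrt (s/2))\<^sup>2)^1 * fact 1)"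
    by (rule integral_normal_moment_even[OF sig_pos])
  then have "(\<integral>x. x\<^sup>2 * nd x \<partial>lborel) = s/2" using s by (simp add: mult.commute)
  then show ?thesis unfolding integral_complex_of_real by (simp only:)
qed

lemma mom0: "integrable lborel (\<lambda>w. complex_of_real (phi s w))"
  "(\<integral>w. complex_of_real (phi s w) \<partial>lborel) = 1"
proof -
  have e: "complex_of_real (phi s w) = complex_of_real (nd (Re w)) * complex_of_real (nd (Im w))" for w
    using phi_split[OF s] by simp
  show "integrable lborel (\<lambda>w. complex_of_real (phi s w))"
    unfolding e by (rule cplx_prod2(1)[OF nd_int nd_int])
  show "(\<integral>w. complex_of_real (phi s w) \<partial>lborel) = 1"
    unfolding e cplx_prod2(2)[OF nd_int nd_int] nd_I0 by simp
qed

lemma mom1: "integrable lborel (\<lambda>w. w * phi s w)"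
  "(\<integral>w. w * phi s w \<partial>lborel) = 0"
proof -
  have e: "w * phi s w = complex_of_real (Re w * nd (Re w)) * complex_of_real (nd (Im w))
     + complex_of_real (nd (Re w)) * (\<i> * complex_of_real (Im w * nd (Im w)))" for w
    by (simp add: complex_eq_iff phi_split[OF s])
  have i2: "integrable lborel (\<lambda>x. \<i> * complex_of_real (x * nd x))"
    using nd_int1 by (rule integrable_mult_right)
  have I2: "(\<integral>x. \<i> * complex_of_real (x * nd x) \<partial>lborel) = 0"
    using nd_I1 by simp
  have a1: "integrable lborel (\<lambda>w. complex_of_real (Re w * nd (Re w)) * complex_of_real (nd (Im w)))"
    by (rule cplx_prod2(1)[OF nd_int1 nd_int])
  have a2: "integrable lborel (\<lambda>w. complex_of_real (nd (Re w)) * (\<i> * complex_of_real (Im w * nd (Im w))))"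
    by (rule cplx_prod2(1)[OF nd_int i2])
  show "integrable lborel (\<lambda>w. w * phi s w)"
    unfolding e by (intro Bochner_Integration.integrable_add a1 a2)
  show "(\<integral>w. w * phi s w \<partial>lborel) = 0"
    unfolding e Bochner_Integration.integral_add[OF a1 a2] cplx_prod2(2)[OF nd_int1 nd_int] cplx_prod2(2)[OF nd_int i2] nd_I1 I2
    by simp
qed

lemma mom1c: "integrable lborel (\<lambda>w. cnj w * phi s w)"
  "(\<integral>w. cnj w * phi s w \<partial>lborel) = 0"
proof -
  have e: "cnj w * phi s w = cnj (w * phi s w)" for w by simp
  show "integrable lborel (\<lambda>w. cnj w * phi s w)"
    unfolding e using mom1(1) by (rule integrable_cnj)
  have "(\<integral>w. cnj w * phi s w \<partial>lborel) = (\<integral>w. cnj (w * phi s w) \<partial>lborel)" by simp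
  also have "\<dots> = cnj (\<integral>w. w * phi s w \<partial>lborel)" by (rule Bochner_Integration.integral_cnj)
  finally show "(\<integral>w. cnj w * phi s w \<partial>lborel) = 0" using mom1(2) by simp
qed

lemma mom2: "integrable lborel (\<lambda>w. cnj w * w * phi s w)"
  "(\<integral>w. cnj w * w * phi s w \<partial>lborel) = s"
proof -
  have e: "cnj w * w * phi s w = complex_of_real ((Re w)\<^sup>2 * nd (Re w)) * complex_of_real (nd (Im w))
     + complex_of_real (nd (Re w)) * complex_of_real ((Im w)\<^sup>2 * nd (Im w))" for w
  proof -
    have "cnj w * w = complex_of_real ((Re w)\<^sup>2 + (Im w)\<^sup>2)"
      by (simp add: complex_eq_iff power2_eq_square)
    then show ?thesis using phi_split[OF s, of w] by (simp add: algebra_simps)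
  qed
  have a1: "integrable lborel (\<lambda>w. complex_of_real ((Re w)\<^sup>2 * nd (Re w)) * complex_of_real (nd (Im w)))"
    by (rule cplx_prod2(1)[OF nd_int2 nd_int])
  have a2: "integrable lborel (\<lambda>w. complex_of_real (nd (Re w)) * complex_of_real ((Im w)\<^sup>2 * nd (Im w)))"
    by (rule cplx_prod2(1)[OF nd_int nd_int2])
  show "integrable lborel (\<lambda>w. cnj w * w * phi s w)"
    unfolding e by (intro Bochner_Integration.integrable_add a1 a2)
  show "(\<integral>w. cnj w * w * phi s w \<partial>lborel) = s"
    unfolding e Bochner_Integration.integral_add[OF a1 a2] cplx_prod2(2)[OF nd_int2 nd_int] cplx_prod2(2)[OF nd_int nd_int2] nd_I0 nd_I2
    by simp
qed

end


interpretation cv: product_sigma_finite "\<lambda>_::nat. lborel::complex measure"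
  by (simp add: product_sigma_finite_def lborel.sigma_finite_measure_axioms)

lemma cgauss_prod: "cgauss_density n s v = (\<Prod>k<n. phi s (v k))"
  unfolding cgauss_density_def phi_def
  by (simp add: prod_dividef exp_sum[symmetric] sum_negf sum_divide_distrib)

definition mf :: "real \<Rightarrow> nat \<Rightarrow> nat \<Rightarrow> nat \<Rightarrow> complex \<Rightarrow> complex" where
  "mf s i j k w = (if k = i then cnj w else 1) * (if k = j then w else 1) * complex_of_real (phi s w)"

lemma mf_int:
  assumes s: "s > 0"
  shows "integrable lborel (mf s i j k)"
    "integral\<^sup>L lborel (mf s i j k) = (if k = i \<and> k = j then s else if k = i \<or> k = j then 0 else 1)"
proof -
  have "integrable lborel (mf s i j k) \<and> integral\<^sup>L lborel (mf s i j k) = (if k = i \<and> k = j then s else if k = i \<or> k = j then 0 else 1)"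
  proof (cases "k = i")
    case True
    then show ?thesis
    proof (cases "k = j")
      case True
      then show ?thesis using \<open>k = i\<close> mom2[OF s] unfolding mf_def by simp
    next
      case False
      then show ?thesis using \<open>k = i\<close> mom1c[OF s] unfolding mf_def by simp
    qed
  next
    case False
    then show ?thesis
    proof (cases "k = j")
      case True
      then show ?thesis using \<open>k \<noteq> i\<close> mom1[OF s] unfolding mf_def by simp
    next
      case False
      then show ?thesis using \<open>k \<noteq> i\<close> mom0[OF s] unfolding mf_def by simp
    qed
  qed
  then show "integrable lborel (mf s i j k)"
    "integral\<^sup>L lborel (mf s i j k) = (if k = i \<and> k = j then s else if k = i \<or> k = j then 0 else 1)"
    by auto
qed

lemma mf_prod:
  "(\<Prod>k<n. mf s i j k (v k)) = (if i < n then cnj (v i) else 1) * (if j < n then v j else 1)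
      * complex_of_real (cgauss_density n s v)"
  unfolding mf_def cgauss_prod prod.distrib
  by (simp add: prod.delta)

lemma mono_int:
  assumes s: "s > 0"
  shows "integrable (cvec_measure n) (\<lambda>v. (if i < n then cnj (v i) else 1) * (if j < n then v j else 1)
      * complex_of_real (cgauss_density n s v))"
    "(\<integral>v. (if i < n then cnj (v i) else 1) * (if j < n then v j else 1)
      * complex_of_real (cgauss_density n s v) \<partial>cvec_measure n)
     = (if i < n \<and> j < n then (if i = j then s else 0) else if i < n \<or> j < n then 0 else 1)"
proof -
  have i: "integrable (cvec_measure n) (\<lambda>v. \<Prod>k<n. mf s i j k (v k))"
    unfolding cvec_measure_def by (intro cv.product_integrable_prod) (auto intro: mf_int[OF s])
  then show "integrable (cvec_measure n) (\<lambda>v. (if i < n then cnj (v i) else 1) * (if j < n then v j else 1)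
      * complex_of_real (cgauss_density n s v))"
    unfolding mf_prod .
  have "(\<integral>v. (\<Prod>k<n. mf s i j k (v k)) \<partial>cvec_measure n) = (\<Prod>k<n. integral\<^sup>L lborel (mf s i j k))"
    unfolding cvec_measure_def by (intro cv.product_integral_prod) (auto intro: mf_int[OF s])
  also have "\<dots> = (\<Prod>k<n. (if k = i \<and> k = j then s else if k = i \<or> k = j then 0 else 1))"
    by (simp add: mf_int[OF s])
  also have "\<dots> = (if i < n \<and> j < n then (if i = j then s else 0) else if i < n \<or> j < n then 0 else 1)"
  proof -
    consider "i < n" "j < n" "i = j" | "i < n" "j < n" "i \<noteq> j" | "i < n" "\<not> j < n" | "\<not> i < n" "j < n" | "\<not> i < n" "\<not> j < n"
      by blast
    then show ?thesis
    proof cases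
      case 1
      have "(\<Prod>k<n. complex_of_real (if k = i \<and> k = j then s else if k = i \<or> k = j then 0 else 1))
         = (\<Prod>k<n. if k = j then complex_of_real s else 1)" by (rule prod.cong) (use 1 in auto)
      also have "\<dots> = complex_of_real s" using 1 by (simp add: prod.delta)
      finally show ?thesis using 1 by simp
    next
      case 2
      then show ?thesis by (auto simp: prod_zero_iff)
    next
      case 3
      then show ?thesis by (auto simp: prod_zero_iff)
    next
      case 4
      then show ?thesis by (auto simp: prod_zero_iff)
    next
      case 5
      then show ?thesis by (auto intro!: prod.neutral)
    qed
  qed
  finally show "(\<integral>v. (if i < n then cnj (v i) else 1) * (if j < n then v j else 1)
      * complex_of_real (cgauss_density n s v) \<partial>cvec_measure n)
     = (if i < n \<and> j < n then (if i = j then s else 0) else if i < n \<or> j < n then 0 else 1)"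
    unfolding mf_prod .
qed

context fixes s :: real and n :: nat assumes s: "s > 0"
begin

abbreviation "gc v \<equiv> complex_of_real (cgauss_density n s v)"

lemma q2: "i < n \<Longrightarrow> j < n \<Longrightarrow> integrable (cvec_measure n) (\<lambda>v. cnj (v i) * v j * gc v)"
  "i < n \<Longrightarrow> j < n \<Longrightarrow> (\<integral>v. cnj (v i) * v j * gc v \<partial>cvec_measure n) = (if i = j then s else 0)"
  using mono_int[OF s, of n i j] by auto

lemma q1: "j < n \<Longrightarrow> integrable (cvec_measure n) (\<lambda>v. v j * gc v)"
  "j < n \<Longrightarrow> (\<integral>v. v j * gc v \<partial>cvec_measure n) = 0"
  using mono_int[OF s, of n n j] by auto

lemma q1c: "i < n \<Longrightarrow> integrable (cvec_measure n) (\<lambda>v. cnj (v i) * gc v)"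
  "i < n \<Longrightarrow> (\<integral>v. cnj (v i) * gc v \<partial>cvec_measure n) = 0"
  using mono_int[OF s, of n i n] by auto

lemma q0: "integrable (cvec_measure n) (\<lambda>v. gc v)"
  "(\<integral>v. gc v \<partial>cvec_measure n) = 1"
  using mono_int[OF s, of n n n] by auto

definition qform :: "(nat \<Rightarrow> nat \<Rightarrow> complex) \<Rightarrow> (nat \<Rightarrow> complex) \<Rightarrow> (nat \<Rightarrow> complex) \<Rightarrow> complex \<Rightarrow> (nat \<Rightarrow> complex) \<Rightarrow> complex" where
  "qform A c e d v = (\<Sum>i<n. \<Sum>j<n. A i j * (cnj (v i) * v j)) + (\<Sum>i<n. c i * v i) + (\<Sum>i<n. e i * cnj (v i)) + d"

lemma qform_expand: "qform A c e d v * gc v =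
   (\<Sum>i<n. \<Sum>j<n. A i j * (cnj (v i) * v j * gc v)) + (\<Sum>i<n. c i * (v i * gc v)) + (\<Sum>i<n. e i * (cnj (v i) * gc v)) + d * gc v"
  unfolding qform_def by (simp add: algebra_simps sum_distrib_left sum_distrib_right)

lemma qform_int:
  fixes A :: "nat \<Rightarrow> nat \<Rightarrow> complex" and c e :: "nat \<Rightarrow> complex" and d :: complex
  shows "integrable (cvec_measure n) (\<lambda>v. qform A c e d v * gc v)"
  "(\<integral>v. qform A c e d v * gc v \<partial>cvec_measure n) = s * (\<Sum>i<n. A i i) + d"
proof -
  have i2: "integrable (cvec_measure n) (\<lambda>v. \<Sum>i<n. \<Sum>j<n. A i j * (cnj (v i) * v j * gc v))"
    by (intro Bochner_Integration.integrable_sum integrable_mult_right q2) auto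
  have i1: "integrable (cvec_measure n) (\<lambda>v. \<Sum>i<n. c i * (v i * gc v))"
    by (intro Bochner_Integration.integrable_sum integrable_mult_right q1) auto
  have i1c: "integrable (cvec_measure n) (\<lambda>v. \<Sum>i<n. e i * (cnj (v i) * gc v))"
    by (intro Bochner_Integration.integrable_sum integrable_mult_right q1c) auto
  have i0: "integrable (cvec_measure n) (\<lambda>v. d * gc v)"
    by (intro integrable_mult_right q0)
  show "integrable (cvec_measure n) (\<lambda>v. qform A c e d v * gc v)"
    unfolding qform_expand by (intro Bochner_Integration.integrable_add i2 i1 i1c i0)
  have I2: "(\<integral>v. (\<Sum>i<n. \<Sum>j<n. A i j * (cnj (v i) * v j * gc v)) \<partial>cvec_measure n) = s * (\<Sum>i<n. A i i)"
  proof -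
    have "(\<integral>v. (\<Sum>i<n. \<Sum>j<n. A i j * (cnj (v i) * v j * gc v)) \<partial>cvec_measure n)
        = (\<Sum>i<n. \<Sum>j<n. A i j * (if i = j then complex_of_real s else 0))"
      apply (subst Bochner_Integration.integral_sum)
       apply (intro Bochner_Integration.integrable_sum integrable_mult_right q2; simp)
      apply (intro sum.cong refl)
      apply (subst Bochner_Integration.integral_sum)
       apply (intro integrable_mult_right q2; simp)
      apply (intro sum.cong refl)
      apply (subst integral_mult_right_zero)
      apply (subst q2(2); simp)
      done
    also have "\<dots> = s * (\<Sum>i<n. A i i)"
      by (simp add: sum_distrib_left mult.commute if_distrib cong: if_cong)
    finally show ?thesis .
  qed
  have I1: "(\<integral>v. (\<Sum>i<n. c i * (v i * gc v)) \<partial>cvec_measure n) = 0"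
    apply (subst Bochner_Integration.integral_sum)
     apply (intro integrable_mult_right q1; simp)
    apply (subst integral_mult_right_zero)
    apply (simp add: q1(2))
    done
  have I1c: "(\<integral>v. (\<Sum>i<n. e i * (cnj (v i) * gc v)) \<partial>cvec_measure n) = 0"
    apply (subst Bochner_Integration.integral_sum)
     apply (intro integrable_mult_right q1c; simp)
    apply (subst integral_mult_right_zero)
    apply (simp add: q1c(2))
    done
  have I0: "(\<integral>v. d * gc v \<partial>cvec_measure n) = d"
    by (subst integral_mult_right_zero) (simp only: q0(2), simp)
  show "(\<integral>v. qform A c e d v * gc v \<partial>cvec_measure n) = s * (\<Sum>i<n. A i i) + d"
    unfolding qform_expand
    by (simp only: Bochner_Integration.integral_add[OF Bochner_Integration.integrable_add[OF Bochner_Integration.integrable_add[OF i2 i1] i1c] i0]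
        Bochner_Integration.integral_add[OF Bochner_Integration.integrable_add[OF i2 i1] i1c]
        Bochner_Integration.integral_add[OF i2 i1] I2 I1 I1c I0) simp
qed

lemma qform_int_Re:
  fixes A :: "nat \<Rightarrow> nat \<Rightarrow> complex" and c e :: "nat \<Rightarrow> complex" and d :: complex
  shows "integrable (cvec_measure n) (\<lambda>v. Re (qform A c e d v) * cgauss_density n s v)"
  "(\<integral>v. Re (qform A c e d v) * cgauss_density n s v \<partial>cvec_measure n) = Re (s * (\<Sum>i<n. A i i) + d)"
proof -
  have e: "Re (qform A c e d v) * cgauss_density n s v = Re (qform A c e d v * gc v)" for v by simp
  show "integrable (cvec_measure n) (\<lambda>v. Re (qform A c e d v) * cgauss_density n s v)"
    unfolding e by (rule integrable_Re[OF qform_int(1)])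
  show "(\<integral>v. Re (qform A c e d v) * cgauss_density n s v \<partial>cvec_measure n) = Re (s * (\<Sum>i<n. A i i) + d)"
    unfolding e integral_Re[OF qform_int(1)] qform_int(2) ..
qed

end


lemma real_gauss_nn:
  assumes a: "a > 0"
  shows "(\<integral>\<^sup>+t. ennreal (exp (- (a * t\<^sup>2))) \<partial>lborel) = ennreal (sqrt (pi / a))"
proof -
  define \<sigma> where "\<sigma> = sqrt (1 / (2 * a))"
  have sp: "\<sigma> > 0" using a by (simp add: \<sigma>_def)
  have s2: "\<sigma>\<^sup>2 = 1 / (2 * a)" using a by (simp add: \<sigma>_def)
  have nd: "normal_density 0 \<sigma> t = exp (- (a * t\<^sup>2)) / sqrt (pi / a)" for t
    unfolding normal_density_def s2 using a
    by (simp add: field_simps real_sqrt_divide)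
  have e: "exp (- (a * t\<^sup>2)) = sqrt (pi / a) * normal_density 0 \<sigma> t" for t
    unfolding nd using a by simp
  have "(\<integral>\<^sup>+t. ennreal (exp (- (a * t\<^sup>2))) \<partial>lborel) = (\<integral>\<^sup>+t. ennreal (sqrt (pi / a) * normal_density 0 \<sigma> t) \<partial>lborel)"
    unfolding e ..
  also have "\<dots> = (\<integral>t. sqrt (pi / a) * normal_density 0 \<sigma> t \<partial>lborel)"
    by (intro nn_integral_eq_integral integrable_mult_right integrable_normal_density[OF sp] AE_I2) (use a in simp)
  also have "\<dots> = sqrt (pi / a)"
    using integral_normal_density[OF sp] by simp
  finally show ?thesis .
qed

lemma cplx_gauss_nn:
  assumes a: "a > 0"
  shows "(\<integral>\<^sup>+w. ennreal (exp (- (a * (cmod w)\<^sup>2))) \<partial>(lborel::complex measure)) = ennreal (pi / a)"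
proof -
  have e: "ennreal (exp (- (a * (cmod w)\<^sup>2))) = (\<Prod>b\<in>Basis. ennreal (exp (- (a * (inner w b)\<^sup>2))))" for w :: complex
    by (simp add: Basis_complex_def inner_complex_def cmod_power2 ennreal_mult'[symmetric] exp_add[symmetric] algebra_simps)
  have "(\<integral>\<^sup>+w. ennreal (exp (- (a * (cmod w)\<^sup>2))) \<partial>(lborel::complex measure))
     = (\<Prod>b\<in>(Basis::complex set). (\<integral>\<^sup>+t. ennreal (exp (- (a * t\<^sup>2))) \<partial>lborel))"
    unfolding e by (rule nn_integral_lborel_prod) auto
  also have "\<dots> = ennreal (sqrt (pi / a)) * ennreal (sqrt (pi / a))"
    by (simp add: Basis_complex_def real_gauss_nn[OF a])
  also have "\<dots> = ennreal (pi / a)"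
    using a by (simp add: ennreal_mult'[symmetric])
  finally show ?thesis .
qed

lemma nn_integral_cplx_translate:
  fixes f :: "complex \<Rightarrow> ennreal"
  assumes [measurable]: "f \<in> borel_measurable borel"
  shows "(\<integral>\<^sup>+w. f w \<partial>lborel) = (\<integral>\<^sup>+w. f (m + w) \<partial>lborel)"
proof -
  have "lborel = density (distr lborel borel (\<lambda>x::complex. m + 1 *\<^sub>R x)) (\<lambda>_. \<bar>1::real\<bar>^DIM(complex))"
    by (rule lborel_affine) simp
  then have L: "(lborel::complex measure) = distr lborel borel (\<lambda>x. m + x)"
    by (simp add: density_1)
  show ?thesis
    by (subst L) (simp add: nn_integral_distr)
qed

lemma cplx_gauss_shift_nn:
  assumes a: "a > 0"
  shows "(\<integral>\<^sup>+w. ennreal (exp (- (a * (cmod (w - m))\<^sup>2))) \<partial>(lborel::complex measure)) = ennreal (pi / a)"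
  by (subst nn_integral_cplx_translate[where m=m]) (simp_all add: cplx_gauss_nn[OF a])

lemma complete_square:
  fixes l r \<beta> y :: complex
  assumes l: "l \<noteq> 0"
  shows "2 * Re (cnj \<beta> * y) - (cmod (l * y + r))\<^sup>2
    = - (cmod l)\<^sup>2 * (cmod (y - (\<beta> / (l * cnj l) - r / l)))\<^sup>2
      + ((cmod \<beta>)\<^sup>2 / (cmod l)\<^sup>2 - 2 * Re (cnj \<beta> * r / l))"
proof -
  have cl: "cnj l \<noteq> 0" using l by simp
  have n: "complex_of_real ((cmod z)\<^sup>2) = z * cnj z" for z by (rule complex_norm_square)
  have re: "complex_of_real (Re z) = (z + cnj z) / 2" for z by (simp add: complex_add_cnj)
  have "complex_of_real (2 * Re (cnj \<beta> * y) - (cmod (l * y + r))\<^sup>2)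
    = complex_of_real (- (cmod l)\<^sup>2 * (cmod (y - (\<beta> / (l * cnj l) - r / l)))\<^sup>2
      + ((cmod \<beta>)\<^sup>2 / (cmod l)\<^sup>2 - 2 * Re (cnj \<beta> * r / l)))"
    apply (simp only: of_real_add of_real_diff of_real_mult of_real_minus of_real_divide n re)
    using l cl apply (simp add: field_simps)
    done
  then show ?thesis by (simp only: of_real_eq_iff)
qed

lemma gauss1_nn:
  fixes l r \<beta> :: complex
  assumes l: "l \<noteq> 0"
  shows "(\<integral>\<^sup>+y. ennreal (exp (2 * Re (cnj \<beta> * y) - (cmod (l * y + r))\<^sup>2)) \<partial>lborel)
    = ennreal (pi / (cmod l)\<^sup>2 * exp ((cmod \<beta>)\<^sup>2 / (cmod l)\<^sup>2 - 2 * Re (cnj \<beta> * r / l)))"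
proof -
  define K where "K = (cmod \<beta>)\<^sup>2 / (cmod l)\<^sup>2 - 2 * Re (cnj \<beta> * r / l)"
  define m where "m = \<beta> / (l * cnj l) - r / l"
  have a: "(cmod l)\<^sup>2 > 0" using l by simp
  have "(\<integral>\<^sup>+y. ennreal (exp (2 * Re (cnj \<beta> * y) - (cmod (l * y + r))\<^sup>2)) \<partial>lborel)
     = (\<integral>\<^sup>+y. ennreal (exp K) * ennreal (exp (- ((cmod l)\<^sup>2 * (cmod (y - m))\<^sup>2))) \<partial>lborel)"
    unfolding complete_square[OF l] K_def m_def
    by (intro nn_integral_cong) (simp add: ennreal_mult'[symmetric] exp_add[symmetric] add.commute)
  also have "\<dots> = ennreal (exp K) * (\<integral>\<^sup>+y. ennreal (exp (- ((cmod l)\<^sup>2 * (cmod (y - m))\<^sup>2))) \<partial>lborel)"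
    by (rule nn_integral_cmult) simp
  also have "\<dots> = ennreal (exp K) * ennreal (pi / (cmod l)\<^sup>2)"
    by (simp only: cplx_gauss_shift_nn[OF a])
  also have "\<dots> = ennreal (pi / (cmod l)\<^sup>2 * exp K)"
    by (simp add: ennreal_mult'[symmetric] mult.commute)
  finally show ?thesis unfolding K_def .
qed


definition gexp :: "nat \<Rightarrow> (nat \<Rightarrow> nat \<Rightarrow> complex) \<Rightarrow> (nat \<Rightarrow> complex) \<Rightarrow> (nat \<Rightarrow> complex) \<Rightarrow> real" where
  "gexp n L b x = (\<Sum>j<n. 2 * Re (cnj (b j) * x j)) - (\<Sum>i<n. (cmod (\<Sum>j<n. L i j * x j))\<^sup>2)"

lemma gexp_meas[measurable]:
  "(\<lambda>x. ennreal (exp (gexp n L b x))) \<in> borel_measurable (Pi\<^sub>M I (\<lambda>_. (lborel::complex measure)))"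
  if "{..<n} \<subseteq> I"
proof -
  have c[measurable]: "(\<lambda>x. x j) \<in> borel_measurable (Pi\<^sub>M I (\<lambda>_. (lborel::complex measure)))" if "j < n" for j
    using that \<open>{..<n} \<subseteq> I\<close> measurable_component_singleton[of j I "\<lambda>_. (lborel::complex measure)"]
    by (auto simp: measurable_lborel1)
  have "(\<lambda>x. \<Sum>j<n. L i j * x j) \<in> borel_measurable (Pi\<^sub>M I (\<lambda>_. (lborel::complex measure)))" for i
    by (intro borel_measurable_sum borel_measurable_times borel_measurable_const c) auto
  then have [measurable]: "(\<lambda>x. (cmod (\<Sum>j<n. L i j * x j))\<^sup>2) \<in> borel_measurable (Pi\<^sub>M I (\<lambda>_. (lborel::complex measure)))" for i
    by measurable
  have [measurable]: "(\<lambda>x. 2 * Re (cnj (b j) * x j)) \<in> borel_measurable (Pi\<^sub>M I (\<lambda>_. (lborel::complex measure)))" if "j < n" for j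
    using c[OF that] by measurable
  show ?thesis unfolding gexp_def by measurable
qed

lemma gaussB:
  fixes L :: "nat \<Rightarrow> nat \<Rightarrow> complex"
  assumes "\<forall>i j. i < j \<longrightarrow> j < n \<longrightarrow> L i j = 0"
    and "\<forall>i<n. L i i \<noteq> 0"
    and "\<forall>j<n. b j = (\<Sum>i<n. cnj (L i j) * c i)"
  shows "(\<integral>\<^sup>+x. ennreal (exp (gexp n L b x)) \<partial>cvec_measure n)
    = ennreal (pi ^ n / (\<Prod>i<n. (cmod (L i i))\<^sup>2) * exp (\<Sum>i<n. (cmod (c i))\<^sup>2))"
  using assms
proof (induction n arbitrary: b)
  case 0
  show ?case unfolding cvec_measure_def lessThan_0
    by (subst cv.nn_integral_empty) (simp_all add: gexp_def)
next
  case (Suc n)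
  note lt = Suc.prems(1) and dg = Suc.prems(2) and bc = Suc.prems(3)
  define l where "l = L n n"
  define \<beta> where "\<beta> = b n"
  define b' where "b' j = b j - cnj (L n j) * c n" for j
  have l: "l \<noteq> 0" using dg by (simp add: l_def)
  have Lin: "i < n \<Longrightarrow> L i n = 0" for i using lt by auto
  have cn: "c n = \<beta> / cnj l"
  proof -
    have "b n = (\<Sum>i<Suc n. cnj (L i n) * c i)" using bc by simp
    also have "\<dots> = cnj l * c n" by (simp add: Lin l_def)
    finally show ?thesis using l by (simp add: \<beta>_def field_simps)
  qed
  have IH: "(\<integral>\<^sup>+x. ennreal (exp (gexp n L b' x)) \<partial>cvec_measure n)
    = ennreal (pi ^ n / (\<Prod>i<n. (cmod (L i i))\<^sup>2) * exp (\<Sum>i<n. (cmod (c i))\<^sup>2))"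
  proof (rule Suc.IH)
    show "\<forall>i j. i < j \<longrightarrow> j < n \<longrightarrow> L i j = 0" using lt by auto
    show "\<forall>i<n. L i i \<noteq> 0" using dg by auto
    show "\<forall>j<n. b' j = (\<Sum>i<n. cnj (L i j) * c i)" using bc by (simp add: b'_def)
  qed
  define C where "C = pi / (cmod l)\<^sup>2 * exp ((cmod (c n))\<^sup>2)"
  have inner: "(\<integral>\<^sup>+y. ennreal (exp (gexp (Suc n) L b (x(n := y)))) \<partial>lborel)
      = ennreal C * ennreal (exp (gexp n L b' x))" for x
  proof -
    define r where "r = (\<Sum>j<n. L n j * x j)"
    have split: "gexp (Suc n) L b (x(n := y)) = gexp n L b x + (2 * Re (cnj \<beta> * y) - (cmod (l * y + r))\<^sup>2)" for y
    proof -
      have s1: "(\<Sum>j<Suc n. 2 * Re (cnj (b j) * (x(n := y)) j)) = (\<Sum>j<n. 2 * Re (cnj (b j) * x j)) + 2 * Re (cnj \<beta> * y)"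
        by (simp add: \<beta>_def)
      have s2: "(\<Sum>j<Suc n. L i j * (x(n := y)) j) = (\<Sum>j<n. L i j * x j)" if "i < n" for i
        using that by (simp add: Lin)
      have s3: "(\<Sum>j<Suc n. L n j * (x(n := y)) j) = l * y + r"
        by (simp add: l_def r_def)
      have s4: "(\<Sum>i<Suc n. (cmod (\<Sum>j<Suc n. L i j * (x(n := y)) j))\<^sup>2)
          = (\<Sum>i<n. (cmod (\<Sum>j<n. L i j * x j))\<^sup>2) + (cmod (l * y + r))\<^sup>2"
      proof -
        have "(\<Sum>i<Suc n. (cmod (\<Sum>j<Suc n. L i j * (x(n := y)) j))\<^sup>2)
          = (\<Sum>i<n. (cmod (\<Sum>j<Suc n. L i j * (x(n := y)) j))\<^sup>2) + (cmod (\<Sum>j<Suc n. L n j * (x(n := y)) j))\<^sup>2"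
          by (rule sum.lessThan_Suc)
        also have "(\<Sum>i<n. (cmod (\<Sum>j<Suc n. L i j * (x(n := y)) j))\<^sup>2) = (\<Sum>i<n. (cmod (\<Sum>j<n. L i j * x j))\<^sup>2)"
          by (rule sum.cong) (auto simp only: s2 lessThan_iff)
        finally show ?thesis unfolding s3 .
      qed
      show ?thesis unfolding gexp_def s1 s4 by simp
    qed
    have "(\<integral>\<^sup>+y. ennreal (exp (gexp (Suc n) L b (x(n := y)))) \<partial>lborel)
       = (\<integral>\<^sup>+y. ennreal (exp (gexp n L b x)) * ennreal (exp (2 * Re (cnj \<beta> * y) - (cmod (l * y + r))\<^sup>2)) \<partial>lborel)"
      unfolding split by (intro nn_integral_cong) (simp add: exp_add ennreal_mult')
    also have "\<dots> = ennreal (exp (gexp n L b x)) * (\<integral>\<^sup>+y. ennreal (exp (2 * Re (cnj \<beta> * y) - (cmod (l * y + r))\<^sup>2)) \<partial>lborel)"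
      by (rule nn_integral_cmult) simp
    also have "\<dots> = ennreal (exp (gexp n L b x)) * ennreal (pi / (cmod l)\<^sup>2 * exp ((cmod \<beta>)\<^sup>2 / (cmod l)\<^sup>2 - 2 * Re (cnj \<beta> * r / l)))"
      by (simp only: gauss1_nn[OF l])
    also have "\<dots> = ennreal C * ennreal (exp (gexp n L b' x))"
    proof -
      have e1: "(cmod \<beta>)\<^sup>2 / (cmod l)\<^sup>2 = (cmod (c n))\<^sup>2" using l by (simp add: cn norm_divide power_divide)
      have e2: "cnj \<beta> * r / l = cnj (c n) * r" using l by (simp add: cn)
      have r2: "2 * Re (cnj (c n) * r) = (\<Sum>j<n. 2 * Re (cnj (c n) * (L n j * x j)))"
        unfolding r_def by (simp add: sum_distrib_left Re_sum)
      have bb: "(\<Sum>j<n. 2 * Re (cnj (b' j) * x j)) = (\<Sum>j<n. 2 * Re (cnj (b j) * x j) - 2 * Re (cnj (c n) * (L n j * x j)))"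
        by (rule sum.cong) (simp_all add: b'_def algebra_simps)
      have e3: "gexp n L b x - 2 * Re (cnj (c n) * r) = gexp n L b' x"
        unfolding gexp_def bb r2 sum_subtractf by simp
      have "exp (gexp n L b x) * (pi / (cmod l)\<^sup>2 * exp ((cmod \<beta>)\<^sup>2 / (cmod l)\<^sup>2 - 2 * Re (cnj \<beta> * r / l)))
          = C * exp (gexp n L b' x)"
        unfolding e1 e2 C_def e3[symmetric] by (simp add: exp_diff field_simps)
      then show ?thesis by (simp add: ennreal_mult'[symmetric] C_def)
    qed
    finally show ?thesis .
  qed
  have "(\<integral>\<^sup>+x. ennreal (exp (gexp (Suc n) L b x)) \<partial>cvec_measure (Suc n))
     = (\<integral>\<^sup>+x. (\<integral>\<^sup>+y. ennreal (exp (gexp (Suc n) L b (x(n := y)))) \<partial>lborel) \<partial>cvec_measure n)"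
    unfolding cvec_measure_def lessThan_Suc
    apply (rule cv.product_nn_integral_insert)
      apply simp
     apply simp
    apply (rule gexp_meas)
    apply auto
    done
  also have "\<dots> = (\<integral>\<^sup>+x. ennreal C * ennreal (exp (gexp n L b' x)) \<partial>cvec_measure n)"
    by (simp only: inner)
  also have "\<dots> = ennreal C * (\<integral>\<^sup>+x. ennreal (exp (gexp n L b' x)) \<partial>cvec_measure n)"
    unfolding cvec_measure_def by (rule nn_integral_cmult) (rule gexp_meas, simp)
  also have "\<dots> = ennreal (pi ^ Suc n / (\<Prod>i<Suc n. (cmod (L i i))\<^sup>2) * exp (\<Sum>i<Suc n. (cmod (c i))\<^sup>2))"
    unfolding IH C_def using l
    by (simp add: ennreal_mult'[symmetric] exp_add l_def field_simps)
  finally show ?case .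
qed


definition mtr :: "nat \<Rightarrow> complex mat \<Rightarrow> complex" where
  "mtr n A = (\<Sum>i<n. A $$ (i,i))"

lemma adj_carrier[simp]: "mat_adjoint (A::complex mat) \<in> carrier_mat (dim_col A) (dim_row A)"
  unfolding mat_adjoint_def by (intro carrier_matI) simp_all

lemma adj_dims[simp]: "dim_row (mat_adjoint (A::complex mat)) = dim_col A" "dim_col (mat_adjoint (A::complex mat)) = dim_row A"
  unfolding mat_adjoint_def by simp_all

lemma adj_index[simp]: "i < dim_col A \<Longrightarrow> j < dim_row A \<Longrightarrow> mat_adjoint (A::complex mat) $$ (i,j) = cnj (A $$ (j,i))"
  unfolding mat_adjoint_def mat_of_rows_def by simp

lemma adj_carrier'[simp]: "A \<in> carrier_mat n m \<Longrightarrow> mat_adjoint (A::complex mat) \<in> carrier_mat m n"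
  by auto

lemma adj_mult: "A \<in> carrier_mat n k \<Longrightarrow> B \<in> carrier_mat k m \<Longrightarrow>
    mat_adjoint ((A::complex mat) * B) = mat_adjoint B * mat_adjoint A"
  by (rule eq_matI) (auto simp: scalar_prod_def mult.commute)

lemma adj_adj[simp]: "mat_adjoint (mat_adjoint (A::complex mat)) = A"
  by (rule eq_matI) auto

lemma adj_one[simp]: "mat_adjoint (1\<^sub>m n :: complex mat) = 1\<^sub>m n"
  by (rule eq_matI) auto

lemma adj_add: "A \<in> carrier_mat n m \<Longrightarrow> B \<in> carrier_mat n m \<Longrightarrow>
    mat_adjoint ((A::complex mat) + B) = mat_adjoint A + mat_adjoint B"
  by (rule eq_matI) auto

lemma adj_minus: "A \<in> carrier_mat n m \<Longrightarrow> B \<in> carrier_mat n m \<Longrightarrow>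
    mat_adjoint ((A::complex mat) - B) = mat_adjoint A - mat_adjoint B"
  by (rule eq_matI) auto

lemma adj_smult: "mat_adjoint (c \<cdot>\<^sub>m (A::complex mat)) = cnj c \<cdot>\<^sub>m mat_adjoint A"
  by (rule eq_matI) auto

lemma mtr_comm: "A \<in> carrier_mat n m \<Longrightarrow> B \<in> carrier_mat m n \<Longrightarrow> mtr n (A * B) = mtr m (B * A)"
  unfolding mtr_def
  apply (simp add: scalar_prod_def atLeast0LessThan)
  apply (subst sum.swap)
  apply (simp add: mult.commute)
  done

lemma mtr_adj: "A \<in> carrier_mat n n \<Longrightarrow> mtr n (mat_adjoint A) = cnj (mtr n A)"
  unfolding mtr_def by simp

lemma mtr_add: "A \<in> carrier_mat n n \<Longrightarrow> B \<in> carrier_mat n n \<Longrightarrow> mtr n (A + B) = mtr n A + mtr n B"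
  unfolding mtr_def by (simp add: sum.distrib)

lemma mtr_minus: "A \<in> carrier_mat n n \<Longrightarrow> B \<in> carrier_mat n n \<Longrightarrow> mtr n (A - B) = mtr n A - mtr n B"
  unfolding mtr_def by (simp add: sum_subtractf)

lemma mtr_smult: "A \<in> carrier_mat n n \<Longrightarrow> mtr n (c \<cdot>\<^sub>m A) = c * mtr n A"
  unfolding mtr_def by (simp add: sum_distrib_left)

lemma mtr_one: "mtr n (1\<^sub>m n) = of_nat n"
  unfolding mtr_def by simp

lemma mtr_frob: "A \<in> carrier_mat n m \<Longrightarrow>
    mtr n (A * mat_adjoint A) = complex_of_real (\<Sum>i<n. \<Sum>j<m. (cmod (A $$ (i,j)))\<^sup>2)"
  unfolding mtr_def
  by (simp add: scalar_prod_def atLeast0LessThan complex_norm_square del: of_real_power)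

lemma minv_ok:
  assumes A: "A \<in> carrier_mat n n" and d: "det A \<noteq> 0"
  shows "minv A \<in> carrier_mat n n" "A * minv A = 1\<^sub>m n" "minv A * A = 1\<^sub>m n"
proof -
  have U: "A \<in> Units (ring_mat TYPE(complex) n undefined)"
    by (rule det_non_zero_imp_unit[OF A d])
  obtain B where B: "mat_inverse A = Some B"
    using mat_inverse(1)[OF A, of undefined] U by (cases "mat_inverse A") auto
  have "minv A = B" unfolding minv_def B by simp
  then show "minv A \<in> carrier_mat n n" "A * minv A = 1\<^sub>m n" "minv A * A = 1\<^sub>m n"
    using mat_inverse(2)[OF A B] by auto
qed


lemma sum_split_add: "(\<Sum>i<(m::nat)+n. f i) = (\<Sum>i<m. f i) + (\<Sum>i<n. f (m + i))"
  by (induct n) (auto simp: add.assoc)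

lemma tri_det:
  assumes A: "A \<in> carrier_mat n n" and lt: "\<And>i j. i < j \<Longrightarrow> j < n \<Longrightarrow> A $$ (i,j) = 0"
  shows "det A = (\<Prod>i<n. A $$ (i,i))"
  using det_lower_triangular[OF lt A] A by (simp add: prod_list_diag_prod atLeast0LessThan)

lemma tri_inv:
  fixes S B :: "complex mat"
  assumes S: "S \<in> carrier_mat k k" and B: "B \<in> carrier_mat k k" and SB: "S * B = 1\<^sub>m k"
    and lt: "\<And>i j. i < j \<Longrightarrow> j < k \<Longrightarrow> S $$ (i,j) = 0"
    and dg: "\<And>i. i < k \<Longrightarrow> S $$ (i,i) \<noteq> 0"
  shows "\<And>i j. i < j \<Longrightarrow> j < k \<Longrightarrow> B $$ (i,j) = 0"
    and "\<And>i. i < k \<Longrightarrow> B $$ (i,i) * S $$ (i,i) = 1"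
proof -
  have eq: "(\<Sum>l<k. S $$ (i,l) * B $$ (l,j)) = (if i = j then 1 else 0)" if "i < k" "j < k" for i j
  proof -
    have "(S * B) $$ (i,j) = (if i = j then 1 else 0)" using SB that by simp
    then show ?thesis using S B that by (simp add: scalar_prod_def atLeast0LessThan)
  qed
  have red: "(\<Sum>l<k. S $$ (i,l) * B $$ (l,j)) = (\<Sum>l<Suc i. S $$ (i,l) * B $$ (l,j))" if "i < k" for i j
  proof -
    have "(\<Sum>l<k. S $$ (i,l) * B $$ (l,j)) = (\<Sum>l\<in>{..<Suc i} \<union> {Suc i..<k}. S $$ (i,l) * B $$ (l,j))"
      using that by (intro sum.cong) auto
    also have "\<dots> = (\<Sum>l<Suc i. S $$ (i,l) * B $$ (l,j)) + (\<Sum>l\<in>{Suc i..<k}. S $$ (i,l) * B $$ (l,j))"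
      by (rule sum.union_disjoint) auto
    also have "(\<Sum>l\<in>{Suc i..<k}. S $$ (i,l) * B $$ (l,j)) = 0"
      by (rule sum.neutral) (auto simp: lt)
    finally show ?thesis by simp
  qed
  have up: "B $$ (i,j) = 0" if "i < j" "j < k" for i j
    using that
  proof (induction i rule: less_induct)
    case (less i)
    have "(\<Sum>l<Suc i. S $$ (i,l) * B $$ (l,j)) = 0"
      using eq[of i j] red[of i j] less.prems by simp
    also have "(\<Sum>l<Suc i. S $$ (i,l) * B $$ (l,j)) = S $$ (i,i) * B $$ (i,j)"
      using less by (simp add: sum.lessThan_Suc)
    finally show ?case using dg[of i] less.prems by simp
  qed
  then show "\<And>i j. i < j \<Longrightarrow> j < k \<Longrightarrow> B $$ (i,j) = 0" by blast
  show "B $$ (i,i) * S $$ (i,i) = 1" if "i < k" for i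
  proof -
    have "(\<Sum>l<Suc i. S $$ (i,l) * B $$ (l,i)) = 1"
      using eq[of i i] red[of i i] that by simp
    also have "(\<Sum>l<Suc i. S $$ (i,l) * B $$ (l,i)) = S $$ (i,i) * B $$ (i,i)"
      using that by (simp add: sum.lessThan_Suc up)
    finally show ?thesis by (simp add: mult.commute)
  qed
qed


lemma massoc: "dim_col (A::'a::semiring_0 mat) = dim_row B \<Longrightarrow> dim_col B = dim_row C \<Longrightarrow> A * B * C = A * (B * C)"
  by (rule assoc_mult_mat[OF carrier_matI carrier_matI carrier_matI]) auto

lemma smult_l: "dim_col A = dim_row B \<Longrightarrow> (k \<cdot>\<^sub>m A) * B = (k::complex) \<cdot>\<^sub>m (A * B)"
  by (rule eq_matI) (auto simp: scalar_prod_def sum_distrib_left mult.assoc)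

lemma smult_r: "dim_col A = dim_row B \<Longrightarrow> A * (k \<cdot>\<^sub>m B) = (k::complex) \<cdot>\<^sub>m (A * B)"
  by (rule eq_matI) (auto simp: scalar_prod_def sum_distrib_left mult.assoc mult.left_commute)

lemma smult_smult_m: "a \<cdot>\<^sub>m (b \<cdot>\<^sub>m A) = ((a::complex) * b) \<cdot>\<^sub>m A"
  by (rule eq_matI) auto

lemma one_smult_m: "(1::complex) \<cdot>\<^sub>m A = A"
  by (rule eq_matI) auto

lemma mdistrib_r: "dim_col A = dim_row B \<Longrightarrow> dim_row B = dim_row C \<Longrightarrow> dim_col B = dim_col C \<Longrightarrow>
    (A::complex mat) * (B + C) = A * B + A * C"
  by (rule mult_add_distrib_mat[OF carrier_matI carrier_matI carrier_matI]) auto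

lemma mdistrib_l: "dim_row A = dim_row B \<Longrightarrow> dim_col A = dim_col B \<Longrightarrow> dim_col A = dim_row C \<Longrightarrow>
    ((A::complex mat) + B) * C = A * C + B * C"
  by (rule add_mult_distrib_mat[OF carrier_matI carrier_matI carrier_matI]) auto

lemma mdistrib_r_minus: "dim_col A = dim_row B \<Longrightarrow> dim_row B = dim_row C \<Longrightarrow> dim_col B = dim_col C \<Longrightarrow>
    (A::complex mat) * (B - C) = A * B - A * C"
  by (rule mult_minus_distrib_mat[OF carrier_matI carrier_matI carrier_matI]) auto

lemma mdistrib_l_minus: "dim_row A = dim_row B \<Longrightarrow> dim_col A = dim_col B \<Longrightarrow> dim_col A = dim_row C \<Longrightarrow>
    ((A::complex mat) - B) * C = A * C - B * C"
  by (rule minus_mult_distrib_mat[OF carrier_matI carrier_matI carrier_matI]) auto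

lemma adj_mult': "dim_col A = dim_row B \<Longrightarrow> mat_adjoint ((A::complex mat) * B) = mat_adjoint B * mat_adjoint A"
  by (rule adj_mult[OF carrier_matI carrier_matI]) auto

lemma inv_cancel: "(A::complex mat) * B = 1\<^sub>m n \<Longrightarrow> dim_col A = dim_row B \<Longrightarrow> dim_row C = n \<Longrightarrow> A * (B * C) = C"
  by (metis assoc_mult_mat carrier_matI index_mult_mat(3) left_mult_one_mat' index_one_mat(3) index_mult_mat(2))

context
  fixes Nr Nt \<nu> :: nat and H Qa La :: "complex mat" and Es N0 :: real
  assumes HC: "H \<in> carrier_mat Nr Nt" and Es: "Es > 0" and N0: "N0 > 0"
    and QC: "Qa \<in> carrier_mat (Nr + Nt) Nt" and QQ: "mat_adjoint Qa * Qa = 1\<^sub>m Nt"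
    and LC: "La \<in> carrier_mat Nt Nt" and Llt: "\<forall>i<Nt. \<forall>j<Nt. i < j \<longrightarrow> La $$ (i,j) = 0"
    and Ldg: "\<forall>i<Nt. Im (La $$ (i,i)) = 0 \<and> Re (La $$ (i,i)) > 0"
    and QL: "aug_mat H N0 Es Nr Nt = Qa * La"
    and nuN: "\<nu> \<le> Nt"
begin

abbreviation "MM \<equiv> mat_adjoint H * H + complex_of_real (N0 / Es) \<cdot>\<^sub>m 1\<^sub>m Nt"

lemma MM_carrier: "MM \<in> carrier_mat Nt Nt" using HC by auto

lemma aug_gram: "mat_adjoint La * La = complex_of_real (1 / N0) \<cdot>\<^sub>m MM"
proof -
  let ?Ha = "aug_mat H N0 Es Nr Nt"
  have HaC: "?Ha \<in> carrier_mat (Nr + Nt) Nt" by (simp add: aug_mat_def)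
  have "mat_adjoint La * La = mat_adjoint La * (mat_adjoint Qa * Qa) * La"
    using LC by (simp add: QQ)
  also have "\<dots> = (mat_adjoint La * mat_adjoint Qa) * (Qa * La)"
    using LC QC by (simp add: massoc)
  also have "\<dots> = mat_adjoint ?Ha * ?Ha"
    unfolding QL using LC QC by (simp add: adj_mult[OF QC LC])
  also have "\<dots> = complex_of_real (1 / N0) \<cdot>\<^sub>m MM"
  proof (rule eq_matI)
    fix i j assume i: "i < dim_row (complex_of_real (1 / N0) \<cdot>\<^sub>m MM)" and j: "j < dim_col (complex_of_real (1 / N0) \<cdot>\<^sub>m MM)"
    then have i: "i < Nt" and j: "j < Nt" using HC by auto
    have sq: "cnj (a / complex_of_real (sqrt c)) * (b / complex_of_real (sqrt c)) = cnj a * b / complex_of_real c"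
      if "c > 0" for a b c
    proof -
      have "complex_of_real (sqrt c) * complex_of_real (sqrt c) = complex_of_real c"
        using that by (simp flip: of_real_mult)
      then show ?thesis using that by (simp add: field_simps)
    qed
    have "(mat_adjoint ?Ha * ?Ha) $$ (i,j) = (\<Sum>k<Nr+Nt. cnj (?Ha $$ (k,i)) * ?Ha $$ (k,j))"
      using i j HaC by (simp add: scalar_prod_def atLeast0LessThan)
    also have "\<dots> = (\<Sum>k<Nr. cnj (H $$ (k,i)) * H $$ (k,j) / complex_of_real N0)
        + (\<Sum>t<Nt. cnj (if t = i then 1 / complex_of_real (sqrt Es) else 0) * (if t = j then 1 / complex_of_real (sqrt Es) else 0))"
      unfolding sum_split_add using i j N0 by (simp add: aug_mat_def sq flip: of_real_mult)
    also have "(\<Sum>t<Nt. cnj (if t = i then 1 / complex_of_real (sqrt Es) else 0) * (if t = j then 1 / complex_of_real (sqrt Es) else 0))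
        = (if i = j then 1 / complex_of_real Es else 0)"
      using i j Es sq[of Es 1 1] by (auto simp: if_distrib cong: if_cong)
    also have "(\<Sum>k<Nr. cnj (H $$ (k,i)) * H $$ (k,j) / complex_of_real N0) + (if i = j then 1 / complex_of_real Es else 0)
        = (complex_of_real (1 / N0) \<cdot>\<^sub>m MM) $$ (i,j)"
      using i j HC N0 Es by (simp add: scalar_prod_def atLeast0LessThan sum_divide_distrib[symmetric] field_simps)
    finally show "(mat_adjoint ?Ha * ?Ha) $$ (i,j) = (complex_of_real (1 / N0) \<cdot>\<^sub>m MM) $$ (i,j)" .
  qed (use HC HaC in auto)
  finally show ?thesis .
qed

lemma La_det: "det La \<noteq> 0"
proof -
  have "det La = (\<Prod>i<Nt. La $$ (i,i))" by (rule tri_det[OF LC]) (use Llt in auto)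
  also have "\<dots> \<noteq> 0"
  proof -
    have "La $$ (i,i) \<noteq> 0" if "i < Nt" for i using Ldg that by (metis less_irrefl zero_complex.simps(1))
    then show ?thesis by simp
  qed
  finally show ?thesis .
qed

definition "Xa = minv La"

lemma Xa: "Xa \<in> carrier_mat Nt Nt" "La * Xa = 1\<^sub>m Nt" "Xa * La = 1\<^sub>m Nt"
  unfolding Xa_def using minv_ok[OF LC La_det] by auto

definition "Minv = minv MM"

lemma MM_eq: "MM = complex_of_real N0 \<cdot>\<^sub>m (mat_adjoint La * La)"
  using aug_gram N0 MM_carrier by (simp add: smult_smult_m one_smult_m)

lemma MM_Y: "MM * (complex_of_real (1/N0) \<cdot>\<^sub>m (Xa * mat_adjoint Xa)) = 1\<^sub>m Nt"
proof -
  have "MM * (complex_of_real (1/N0) \<cdot>\<^sub>m (Xa * mat_adjoint Xa)) = mat_adjoint La * (La * Xa) * mat_adjoint Xa"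
    unfolding MM_eq using LC Xa N0 by (simp add: smult_l smult_r smult_smult_m one_smult_m massoc inv_cancel)
  also have "\<dots> = mat_adjoint La * mat_adjoint Xa"
    using LC Xa by (simp add: massoc)
  also have "\<dots> = mat_adjoint (Xa * La)"
    by (rule adj_mult'[symmetric]) (use LC Xa in simp)
  also have "\<dots> = 1\<^sub>m Nt" using Xa by simp
  finally show ?thesis .
qed

lemma MM_det: "det MM \<noteq> 0"
proof -
  have "det MM * det (complex_of_real (1/N0) \<cdot>\<^sub>m (Xa * mat_adjoint Xa)) = 1"
    using det_mult[OF MM_carrier, of "complex_of_real (1/N0) \<cdot>\<^sub>m (Xa * mat_adjoint Xa)"] MM_Y Xa by simp
  then show ?thesis by auto
qed

lemma Minv: "Minv \<in> carrier_mat Nt Nt" "MM * Minv = 1\<^sub>m Nt" "Minv * MM = 1\<^sub>m Nt"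
  unfolding Minv_def using minv_ok[OF MM_carrier MM_det] by auto

lemma Minv_eq: "Minv = complex_of_real (1/N0) \<cdot>\<^sub>m (Xa * mat_adjoint Xa)"
proof -
  have "Minv = Minv * (MM * (complex_of_real (1/N0) \<cdot>\<^sub>m (Xa * mat_adjoint Xa)))"
    unfolding MM_Y using Minv by simp
  also have "\<dots> = complex_of_real (1/N0) \<cdot>\<^sub>m (Xa * mat_adjoint Xa)"
    by (rule inv_cancel[OF Minv(3)]) (use Minv MM_carrier Xa in auto)
  finally show ?thesis .
qed

lemma Minv_herm: "mat_adjoint Minv = Minv"
  unfolding Minv_eq using Xa by (simp add: adj_smult adj_mult')

lemma La_Minv: "La * Minv * mat_adjoint La = complex_of_real (1/N0) \<cdot>\<^sub>m 1\<^sub>m Nt"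
proof -
  have "La * Minv * mat_adjoint La = complex_of_real (1/N0) \<cdot>\<^sub>m ((La * Xa) * mat_adjoint (La * Xa))"
    unfolding Minv_eq using LC Xa(1) by (simp add: smult_l smult_r massoc adj_mult')
  also have "(La * Xa) * mat_adjoint (La * Xa) = 1\<^sub>m Nt" using Xa by simp
  finally show ?thesis .
qed

abbreviation "aa \<equiv> complex_of_real (N0 / Es)"
definition "Wm = Minv * mat_adjoint H"
definition "Em = 1\<^sub>m Nt - Wm * H"

lemma Wm_carrier: "Wm \<in> carrier_mat Nt Nr" unfolding Wm_def using Minv HC by auto
lemma Em_carrier: "Em \<in> carrier_mat Nt Nt" unfolding Em_def using Wm_carrier HC by auto

lemma Minv_HH: "Minv * (mat_adjoint H * H) = 1\<^sub>m Nt - aa \<cdot>\<^sub>m Minv"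
proof -
  have "1\<^sub>m Nt = Minv * MM" using Minv by simp
  also have "\<dots> = Minv * (mat_adjoint H * H) + aa \<cdot>\<^sub>m Minv"
    using Minv HC by (simp add: mdistrib_r smult_r)
  finally have "1\<^sub>m Nt = Minv * (mat_adjoint H * H) + aa \<cdot>\<^sub>m Minv" .
  note eq = this
  show ?thesis
  proof (rule eq_matI)
    fix i j assume "i < dim_row (1\<^sub>m Nt - aa \<cdot>\<^sub>m Minv)" "j < dim_col (1\<^sub>m Nt - aa \<cdot>\<^sub>m Minv)"
    then have ij: "i < Nt" "j < Nt" using Minv by auto
    have "(1\<^sub>m Nt :: complex mat) $$ (i,j) = (Minv * (mat_adjoint H * H) + aa \<cdot>\<^sub>m Minv) $$ (i,j)"
      using eq by simp
    then show "(Minv * (mat_adjoint H * H)) $$ (i,j) = (1\<^sub>m Nt - aa \<cdot>\<^sub>m Minv) $$ (i,j)"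
      using ij Minv HC by (simp add: algebra_simps)
  qed (use Minv HC in auto)
qed

lemma Em_eq: "Em = aa \<cdot>\<^sub>m Minv"
proof -
  have "Wm * H = Minv * (mat_adjoint H * H)" unfolding Wm_def using Minv HC by (simp add: massoc)
  then show ?thesis unfolding Em_def Minv_HH using Minv
    by (intro eq_matI) auto
qed

lemma EE: "Em * mat_adjoint Em = (aa * aa) \<cdot>\<^sub>m (Minv * Minv)"
  unfolding Em_eq using Minv by (simp add: adj_smult Minv_herm smult_l smult_r smult_smult_m)

lemma WW: "Wm * mat_adjoint Wm = Minv - aa \<cdot>\<^sub>m (Minv * Minv)"
proof -
  have "Wm * mat_adjoint Wm = (Minv * (mat_adjoint H * H)) * Minv"
    unfolding Wm_def using Minv HC by (simp add: adj_mult' Minv_herm massoc)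
  also have "\<dots> = Minv - aa \<cdot>\<^sub>m (Minv * Minv)"
    unfolding Minv_HH using Minv by (simp add: mdistrib_l_minus smult_l)
  finally show ?thesis .
qed

lemma P_eq: "complex_of_real Es \<cdot>\<^sub>m (Em * mat_adjoint Em) + complex_of_real N0 \<cdot>\<^sub>m (Wm * mat_adjoint Wm)
   = complex_of_real N0 \<cdot>\<^sub>m Minv"
proof -
  have c: "complex_of_real Es * (aa * aa) = complex_of_real N0 * aa" using Es
    by (simp add: field_simps power2_eq_square flip: of_real_mult of_real_divide)
  show ?thesis unfolding EE WW using Minv
    by (intro eq_matI) (auto simp: algebra_simps c)
qed

abbreviation "kk \<equiv> Nt - \<nu>"
definition "Sb = lr_block La Nt \<nu>"
definition "Bm = minv Sb"

lemma Sb_carrier: "Sb \<in> carrier_mat kk kk" unfolding Sb_def lr_block_def by simp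
lemma Sb_idx: "a < kk \<Longrightarrow> b < kk \<Longrightarrow> Sb $$ (a,b) = La $$ (a + \<nu>, b + \<nu>)"
  unfolding Sb_def lr_block_def by simp
lemma Sb_lt: "a < b \<Longrightarrow> b < kk \<Longrightarrow> Sb $$ (a,b) = 0"
  using Llt by (simp add: Sb_idx)
lemma La_dg: "i < Nt \<Longrightarrow> La $$ (i,i) \<noteq> 0"
  using Ldg by (metis less_irrefl zero_complex.simps(1))
lemma Sb_dg: "a < kk \<Longrightarrow> Sb $$ (a,a) \<noteq> 0"
  using La_dg by (simp add: Sb_idx)
lemma Sb_det: "det Sb \<noteq> 0"
  using tri_det[OF Sb_carrier Sb_lt] Sb_dg by simp
lemma Bm: "Bm \<in> carrier_mat kk kk" "Sb * Bm = 1\<^sub>m kk" "Bm * Sb = 1\<^sub>m kk"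
  unfolding Bm_def using minv_ok[OF Sb_carrier Sb_det] by auto
lemma Bm_lt: "a < b \<Longrightarrow> b < kk \<Longrightarrow> Bm $$ (a,b) = 0"
  using tri_inv(1)[OF Sb_carrier Bm(1) Bm(2) Sb_lt Sb_dg] by blast
lemma Bm_dg: "a < kk \<Longrightarrow> Bm $$ (a,a) * Sb $$ (a,a) = 1"
  using tri_inv(2)[OF Sb_carrier Bm(1) Bm(2) Sb_lt Sb_dg] by blast

definition "rs a = (\<Sum>b<kk. (cmod (Bm $$ (a,b)))\<^sup>2)"
definition "sg a = 1 / sqrt (rs a)"

lemma rs_pos: "a < kk \<Longrightarrow> rs a > 0"
proof -
  assume a: "a < kk"
  have "Bm $$ (a,a) \<noteq> 0" using Bm_dg[OF a] by auto
  then have "(cmod (Bm $$ (a,a)))\<^sup>2 > 0" by simp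
  also have "(cmod (Bm $$ (a,a)))\<^sup>2 \<le> rs a"
    unfolding rs_def using a by (intro member_le_sum) auto
  finally show ?thesis .
qed

lemma Sig_eq: "Sigma_a Sb = mat kk kk (\<lambda>(i,j). if i = j then complex_of_real (sg i) else 0)"
proof -
  have "Re ((Bm * mat_adjoint Bm) $$ (a,a)) = rs a" if "a < kk" for a
    unfolding rs_def cmod_power2 using that Bm(1) by (simp add: scalar_prod_def atLeast0LessThan power2_eq_square sum.distrib)
  then show ?thesis unfolding Sigma_a_def Let_def Bm_def[symmetric] sg_def
    using Sb_carrier by (intro eq_matI) auto
qed

definition "Dm = Sigma_a Sb * Bm"
lemma Dm_carrier: "Dm \<in> carrier_mat kk kk" unfolding Dm_def Sig_eq using Bm by auto
lemma Dm_idx: "a < kk \<Longrightarrow> b < kk \<Longrightarrow> Dm $$ (a,b) = complex_of_real (sg a) * Bm $$ (a,b)"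
proof -
  assume ab: "a < kk" "b < kk"
  have "Dm $$ (a,b) = (\<Sum>i<kk. (if a = i then complex_of_real (sg a) else 0) * Bm $$ (i,b))"
    unfolding Dm_def Sig_eq using Bm(1) ab by (simp add: scalar_prod_def atLeast0LessThan)
  also have "\<dots> = (\<Sum>i<kk. if i = a then complex_of_real (sg a) * Bm $$ (a,b) else 0)"
    by (rule sum.cong) auto
  also have "\<dots> = complex_of_real (sg a) * Bm $$ (a,b)" using ab by simp
  finally show ?thesis .
qed

lemma Wap_eq: "W_ap La Nt \<nu> = four_block_mat (1\<^sub>m \<nu>) (0\<^sub>m \<nu> kk) (0\<^sub>m kk \<nu>) Dm"
  unfolding W_ap_def Let_def Sb_def[symmetric] Bm_def[symmetric] Dm_def ..

lemma Wap_carrier: "W_ap La Nt \<nu> \<in> carrier_mat Nt Nt"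
  unfolding Wap_eq using Dm_carrier nuN by (auto intro!: four_block_carrier_mat[of _ \<nu> \<nu> _ kk kk, simplified])

lemma Wap_idx: "i < Nt \<Longrightarrow> j < Nt \<Longrightarrow> W_ap La Nt \<nu> $$ (i,j) =
   (if i < \<nu> then (if i = j then 1 else 0) else if j < \<nu> then 0 else Dm $$ (i - \<nu>, j - \<nu>))"
  unfolding Wap_eq using Dm_carrier nuN by (subst index_mat_four_block) auto

lemma Nt_split: "Nt = \<nu> + kk" using nuN by simp

lemma Wap_frob: "(\<Sum>i<Nt. \<Sum>j<Nt. (cmod (W_ap La Nt \<nu> $$ (i,j)))\<^sup>2) = real Nt"
proof -
  have r1: "(\<Sum>j<Nt. (cmod (W_ap La Nt \<nu> $$ (i,j)))\<^sup>2) = 1" if i: "i < \<nu>" for i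
  proof -
    have "(\<Sum>j<Nt. (cmod (W_ap La Nt \<nu> $$ (i,j)))\<^sup>2) = (\<Sum>j<Nt. if j = i then 1 else 0)"
      using i nuN by (intro sum.cong) (auto simp: Wap_idx)
    also have "\<dots> = 1" using i nuN by simp
    finally show ?thesis .
  qed
  have r2: "(\<Sum>j<Nt. (cmod (W_ap La Nt \<nu> $$ (\<nu> + a,j)))\<^sup>2) = 1" if a: "a < kk" for a
  proof -
    have "(\<Sum>j<Nt. (cmod (W_ap La Nt \<nu> $$ (\<nu> + a,j)))\<^sup>2)
        = (\<Sum>j<\<nu>. (cmod (W_ap La Nt \<nu> $$ (\<nu> + a,j)))\<^sup>2) + (\<Sum>b<kk. (cmod (W_ap La Nt \<nu> $$ (\<nu> + a,\<nu> + b)))\<^sup>2)"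
      by (subst Nt_split) (rule sum_split_add)
    also have "(\<Sum>j<\<nu>. (cmod (W_ap La Nt \<nu> $$ (\<nu> + a,j)))\<^sup>2) = 0"
      using a nuN by (intro sum.neutral) (auto simp: Wap_idx)
    also have "(\<Sum>b<kk. (cmod (W_ap La Nt \<nu> $$ (\<nu> + a,\<nu> + b)))\<^sup>2) = (\<Sum>b<kk. (sg a)\<^sup>2 * (cmod (Bm $$ (a,b)))\<^sup>2)"
      using a nuN by (intro sum.cong) (auto simp: Wap_idx Dm_idx norm_mult power_mult_distrib)
    also have "\<dots> = (sg a)\<^sup>2 * rs a" unfolding rs_def by (simp add: sum_distrib_left)
    also have "\<dots> = 1" using rs_pos[OF a] unfolding sg_def by (simp add: power_divide)
    finally show ?thesis by simp
  qed
  have "(\<Sum>i<Nt. \<Sum>j<Nt. (cmod (W_ap La Nt \<nu> $$ (i,j)))\<^sup>2)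
      = (\<Sum>i<\<nu>. \<Sum>j<Nt. (cmod (W_ap La Nt \<nu> $$ (i,j)))\<^sup>2) + (\<Sum>a<kk. \<Sum>j<Nt. (cmod (W_ap La Nt \<nu> $$ (\<nu> + a,j)))\<^sup>2)"
    by (subst (1) Nt_split) (rule sum_split_add)
  also have "\<dots> = (\<Sum>i<\<nu>. 1) + (\<Sum>a<kk. 1)"
    using r1 r2 by simp
  also have "\<dots> = real Nt" using nuN by simp
  finally show ?thesis .
qed

definition "Lap = L_ap La Nt \<nu>"

lemma Lap_carrier: "Lap \<in> carrier_mat Nt Nt"
  unfolding Lap_def L_ap_def using Wap_carrier LC by auto

lemma Lap_idx: "i < Nt \<Longrightarrow> j < Nt \<Longrightarrow> Lap $$ (i,j) =
   (if i < \<nu> then La $$ (i,j) else (\<Sum>t<kk. Dm $$ (i - \<nu>, t) * La $$ (\<nu> + t, j)))"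
proof -
  assume ij: "i < Nt" "j < Nt"
  have "Lap $$ (i,j) = (\<Sum>k<Nt. W_ap La Nt \<nu> $$ (i,k) * La $$ (k,j))"
    unfolding Lap_def L_ap_def using Wap_carrier LC ij by (simp add: scalar_prod_def atLeast0LessThan)
  also have "\<dots> = (\<Sum>k<\<nu>. W_ap La Nt \<nu> $$ (i,k) * La $$ (k,j)) + (\<Sum>t<kk. W_ap La Nt \<nu> $$ (i,\<nu> + t) * La $$ (\<nu> + t,j))"
    by (subst (1) Nt_split) (rule sum_split_add)
  also have "\<dots> = (if i < \<nu> then La $$ (i,j) else (\<Sum>t<kk. Dm $$ (i - \<nu>, t) * La $$ (\<nu> + t, j)))"
  proof (cases "i < \<nu>")
    case True
    have "(\<Sum>k<\<nu>. W_ap La Nt \<nu> $$ (i,k) * La $$ (k,j)) = (\<Sum>k<\<nu>. if k = i then La $$ (i,j) else 0)"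
      using True ij nuN by (intro sum.cong) (auto simp: Wap_idx)
    moreover have "(\<Sum>t<kk. W_ap La Nt \<nu> $$ (i,\<nu> + t) * La $$ (\<nu> + t,j)) = 0"
      using True ij nuN by (intro sum.neutral) (auto simp: Wap_idx)
    ultimately show ?thesis using True by simp
  next
    case False
    have "(\<Sum>k<\<nu>. W_ap La Nt \<nu> $$ (i,k) * La $$ (k,j)) = 0"
      using False ij nuN by (intro sum.neutral) (auto simp: Wap_idx)
    moreover have "(\<Sum>t<kk. W_ap La Nt \<nu> $$ (i,\<nu> + t) * La $$ (\<nu> + t,j)) = (\<Sum>t<kk. Dm $$ (i - \<nu>, t) * La $$ (\<nu> + t, j))"
      using False ij nuN by (intro sum.cong) (auto simp: Wap_idx)
    ultimately show ?thesis using False by simp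
  qed
  finally show ?thesis .
qed

lemma Lap_lt: "i < j \<Longrightarrow> j < Nt \<Longrightarrow> Lap $$ (i,j) = 0"
proof -
  assume ij: "i < j" "j < Nt"
  show ?thesis
  proof (cases "i < \<nu>")
    case True then show ?thesis using ij Llt by (simp add: Lap_idx)
  next
    case False
    have "Dm $$ (i - \<nu>, t) * La $$ (\<nu> + t, j) = 0" if t: "t < kk" for t
    proof (cases "t \<le> i - \<nu>")
      case True
      then have "\<nu> + t < j" using False ij by linarith
      then show ?thesis using Llt ij by simp
    next
      case False
      then have "i - \<nu> < t" by simp
      then show ?thesis using t Bm_lt by (simp add: Dm_idx)
    qed
    then have "(\<Sum>t<kk. Dm $$ (i - \<nu>, t) * La $$ (\<nu> + t, j)) = 0" by (intro sum.neutral) auto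
    then show ?thesis using ij False by (simp add: Lap_idx)
  qed
qed

lemma Lap_dg: "i < Nt \<Longrightarrow> Lap $$ (i,i) \<noteq> 0"
proof -
  assume i: "i < Nt"
  show ?thesis
  proof (cases "i < \<nu>")
    case True then show ?thesis using i La_dg by (simp add: Lap_idx)
  next
    case False
    define a where "a = i - \<nu>"
    have a: "a < kk" "i = \<nu> + a" using False i by (auto simp: a_def)
    have "(\<Sum>t<kk. Dm $$ (a, t) * La $$ (\<nu> + t, i)) = (\<Sum>t<kk. if t = a then complex_of_real (sg a) else 0)"
    proof (rule sum.cong)
      fix t assume t: "t \<in> {..<kk}"
      consider "t < a" | "t = a" | "a < t" by linarith
      then show "Dm $$ (a, t) * La $$ (\<nu> + t, i) = (if t = a then complex_of_real (sg a) else 0)"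
      proof cases
        case 1 then show ?thesis using Llt a t by auto
      next
        case 2
        have "Bm $$ (a,a) * La $$ (\<nu> + a, \<nu> + a) = 1" using Bm_dg[OF a(1)] by (simp add: Sb_idx a(1) add.commute)
        then show ?thesis using 2 a by (simp add: Dm_idx mult.assoc)
      next
        case 3 then show ?thesis using t Bm_lt by (simp add: Dm_idx)
      qed
    qed simp
    also have "\<dots> = complex_of_real (sg a)" using a by simp
    finally have "Lap $$ (i,i) = complex_of_real (sg a)" using False i by (simp add: Lap_idx a_def)
    moreover have "sg a > 0" using rs_pos[OF a(1)] by (simp add: sg_def)
    ultimately show ?thesis by simp
  qed
qed

definition "Gm = mat_adjoint Lap * Lap"
lemma Gm_carrier: "Gm \<in> carrier_mat Nt Nt" unfolding Gm_def using Lap_carrier by auto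
lemma Gm_herm: "mat_adjoint Gm = Gm" unfolding Gm_def using Lap_carrier by (simp add: adj_mult')

lemma detG: "det Gm = complex_of_real (\<Prod>i<Nt. (cmod (Lap $$ (i,i)))\<^sup>2)"
proof -
  have ut: "upper_triangular (mat_adjoint Lap)"
    using Lap_carrier by (auto simp: upper_triangular_def Lap_lt)
  have d1: "det (mat_adjoint Lap) = (\<Prod>i<Nt. cnj (Lap $$ (i,i)))"
    using det_upper_triangular[OF ut adj_carrier'[OF Lap_carrier]] Lap_carrier
    by (simp add: prod_list_diag_prod atLeast0LessThan)
  have d2: "det Lap = (\<Prod>i<Nt. Lap $$ (i,i))"
    by (rule tri_det[OF Lap_carrier Lap_lt])
  have "det Gm = (\<Prod>i<Nt. cnj (Lap $$ (i,i))) * (\<Prod>i<Nt. Lap $$ (i,i))"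
    unfolding Gm_def using det_mult[OF adj_carrier'[OF Lap_carrier] Lap_carrier] d1 d2 by simp
  also have "\<dots> = (\<Prod>i<Nt. complex_of_real ((cmod (Lap $$ (i,i)))\<^sup>2))"
    unfolding prod.distrib[symmetric]
    by (rule prod.cong) (simp_all add: complex_norm_square mult.commute del: of_real_power)
  finally show ?thesis by simp
qed

lemma detG_pos: "(\<Prod>i<Nt. (cmod (Lap $$ (i,i)))\<^sup>2) > 0"
  using Lap_dg by (intro prod_pos) auto

lemma La_Minv': "dim_row X = Nt \<Longrightarrow> La * (Minv * (mat_adjoint La * X)) = complex_of_real (1/N0) \<cdot>\<^sub>m X"
proof -
  assume X: "dim_row X = Nt"
  have "La * (Minv * (mat_adjoint La * X)) = (La * Minv * mat_adjoint La) * X"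
    using LC Minv X by (simp add: massoc)
  also have "\<dots> = complex_of_real (1/N0) \<cdot>\<^sub>m X" unfolding La_Minv using X by (simp add: smult_l)
  finally show ?thesis .
qed

lemma trGMinv: "mtr Nt (Gm * Minv) = complex_of_real (real Nt / N0)"
proof -
  have "mtr Nt (Gm * Minv) = mtr Nt (mat_adjoint Lap * (Lap * Minv))"
    unfolding Gm_def using Lap_carrier Minv by (simp add: massoc)
  also have "\<dots> = mtr Nt ((Lap * Minv) * mat_adjoint Lap)"
    using Lap_carrier Minv by (intro mtr_comm) auto
  also have "(Lap * Minv) * mat_adjoint Lap = complex_of_real (1/N0) \<cdot>\<^sub>m (W_ap La Nt \<nu> * mat_adjoint (W_ap La Nt \<nu>))"
    unfolding Lap_def L_ap_def using Wap_carrier LC Minv by (simp add: massoc adj_mult' La_Minv' smult_r)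
  also have "mtr Nt \<dots> = complex_of_real (1/N0) * complex_of_real (real Nt)"
    using Wap_carrier by (simp add: mtr_smult mtr_frob Wap_frob)
  finally show ?thesis by simp
qed

definition "Km = Lap * Wm"
definition "Tm = mat_adjoint H * (mat_adjoint Wm * Gm)"

lemma Tm_carrier: "Tm \<in> carrier_mat Nt Nt" unfolding Tm_def using HC Wm_carrier Gm_carrier by auto

lemma F5_complex:
  "complex_of_real Es * (mtr Nt Gm - cnj (mtr Nt Tm) - mtr Nt Tm + mtr Nt (mat_adjoint (Km * H) * (Km * H)))
   + complex_of_real N0 * mtr Nr (mat_adjoint Km * Km) = of_nat Nt"
proof -
  have KH: "mat_adjoint (Km * H) * (Km * H) = Tm * (Wm * H)"
    unfolding Km_def Tm_def Gm_def using Lap_carrier Wm_carrier HC by (simp add: massoc adj_mult')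
  have KK: "mat_adjoint Km * Km = mat_adjoint Wm * (Gm * Wm)"
    unfolding Km_def Gm_def using Lap_carrier Wm_carrier HC by (simp add: massoc adj_mult')
  have adjEm: "mat_adjoint Em = 1\<^sub>m Nt - mat_adjoint H * mat_adjoint Wm"
    unfolding Em_def using Wm_carrier HC by (subst adj_minus[of _ Nt Nt]) (auto simp: adj_mult')
  have GWH: "mtr Nt (Gm * (Wm * H)) = cnj (mtr Nt Tm)"
  proof -
    have "mat_adjoint (Gm * (Wm * H)) = Tm"
      unfolding Tm_def using Gm_carrier Wm_carrier HC by (simp add: adj_mult' Gm_herm massoc)
    then have "mtr Nt Tm = cnj (mtr Nt (Gm * (Wm * H)))"
      using mtr_adj[of "Gm * (Wm * H)" Nt] Gm_carrier Wm_carrier HC by auto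
    then show ?thesis by simp
  qed
  have E1: "mat_adjoint Em * (Gm * Em) = (Gm - Tm) - (Gm * (Wm * H) - Tm * (Wm * H))"
  proof -
    have "Gm * Em = Gm - Gm * (Wm * H)"
      unfolding Em_def using Gm_carrier Wm_carrier HC by (simp add: mdistrib_r_minus)
    then show ?thesis unfolding adjEm Tm_def using Gm_carrier Wm_carrier HC
      by (simp add: mdistrib_l_minus mdistrib_r_minus massoc)
  qed
  have tE: "mtr Nt (mat_adjoint Em * (Gm * Em)) = mtr Nt Gm - cnj (mtr Nt Tm) - mtr Nt Tm + mtr Nt (Tm * (Wm * H))"
  proof -
    have c1: "Gm * (Wm * H) \<in> carrier_mat Nt Nt" "Tm * (Wm * H) \<in> carrier_mat Nt Nt"
      using Gm_carrier Wm_carrier HC Tm_carrier by auto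
    have c2: "Gm - Tm \<in> carrier_mat Nt Nt" "Gm * (Wm * H) - Tm * (Wm * H) \<in> carrier_mat Nt Nt"
      using c1 Gm_carrier Tm_carrier by (auto intro: minus_carrier_mat)
    show ?thesis unfolding E1 mtr_minus[OF c2] mtr_minus[OF Gm_carrier Tm_carrier] mtr_minus[OF c1] GWH
      by simp
  qed
  have c1: "mtr Nt (mat_adjoint Em * (Gm * Em)) = mtr Nt (Gm * (Em * mat_adjoint Em))"
  proof -
    have "mtr Nt (mat_adjoint Em * (Gm * Em)) = mtr Nt ((Gm * Em) * mat_adjoint Em)"
      using Em_carrier Gm_carrier by (intro mtr_comm) auto
    then show ?thesis using Em_carrier Gm_carrier by (simp add: massoc)
  qed
  have c2: "mtr Nr (mat_adjoint Wm * (Gm * Wm)) = mtr Nt (Gm * (Wm * mat_adjoint Wm))"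
  proof -
    have "mtr Nr (mat_adjoint Wm * (Gm * Wm)) = mtr Nt ((Gm * Wm) * mat_adjoint Wm)"
      using Wm_carrier Gm_carrier by (intro mtr_comm) auto
    then show ?thesis using Wm_carrier Gm_carrier by (simp add: massoc)
  qed
  have "complex_of_real Es * mtr Nt (Gm * (Em * mat_adjoint Em)) + complex_of_real N0 * mtr Nt (Gm * (Wm * mat_adjoint Wm))
     = mtr Nt (Gm * (complex_of_real Es \<cdot>\<^sub>m (Em * mat_adjoint Em) + complex_of_real N0 \<cdot>\<^sub>m (Wm * mat_adjoint Wm)))"
    using Gm_carrier Em_carrier Wm_carrier by (simp add: mdistrib_r smult_r mtr_add mtr_smult)
  also have "\<dots> = mtr Nt (Gm * (complex_of_real N0 \<cdot>\<^sub>m Minv))" unfolding P_eq ..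
  also have "\<dots> = complex_of_real N0 * mtr Nt (Gm * Minv)"
    using Gm_carrier Minv by (simp add: smult_r mtr_smult)
  also have "\<dots> = of_nat Nt" unfolding trGMinv using N0 by simp
  finally show ?thesis unfolding KH KK tE[symmetric] c1 c2 .
qed

end


lemma VL1: "v \<in> carrier_vec n \<Longrightarrow> w \<in> carrier_vec n \<Longrightarrow> conjugate v \<bullet> w = (\<Sum>i<n. cnj (v$i) * (w$i :: complex))"
  by (simp add: scalar_prod_def atLeast0LessThan)

lemma VL2: "A \<in> carrier_mat r n \<Longrightarrow> i < r \<Longrightarrow> (A *\<^sub>v vec n x) $ i = (\<Sum>k<n. A $$ (i,k) * (x k :: complex))"
  by (simp add: scalar_prod_def atLeast0LessThan)

lemma row_vec: "dim_col A = n \<Longrightarrow> i < dim_row A \<Longrightarrow> Matrix.row A i \<bullet> vec n x = (\<Sum>k<n. A $$ (i,k) * (x k :: complex))"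
  by (simp add: scalar_prod_def atLeast0LessThan)

lemma norm_sq_Re: "(cmod w)\<^sup>2 = Re (cnj w * w)"
  unfolding cmod_power2 by (simp add: power2_eq_square)

lemma SQ: "(\<Sum>i<r. cnj (\<Sum>j<n. B i j * x j) * (\<Sum>k<n. C i k * x k))
   = (\<Sum>j<n. \<Sum>k<n. (\<Sum>i<r. cnj (B i j) * C i k) * (cnj (x j) * (x k :: complex)))"
proof -
  have "(\<Sum>i<r. cnj (\<Sum>j<n. B i j * x j) * (\<Sum>k<n. C i k * x k))
      = (\<Sum>i<r. \<Sum>j<n. \<Sum>k<n. cnj (B i j) * C i k * (cnj (x j) * x k))"
    by (simp add: cnj_sum sum_distrib_left sum_distrib_right algebra_simps)
  also have "\<dots> = (\<Sum>j<n. \<Sum>i<r. \<Sum>k<n. cnj (B i j) * C i k * (cnj (x j) * x k))"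
    by (rule sum.swap)
  also have "\<dots> = (\<Sum>j<n. \<Sum>k<n. \<Sum>i<r. cnj (B i j) * C i k * (cnj (x j) * x k))"
    by (intro sum.cong refl sum.swap)
  also have "\<dots> = (\<Sum>j<n. \<Sum>k<n. (\<Sum>i<r. cnj (B i j) * C i k) * (cnj (x j) * x k))"
    by (simp add: sum_distrib_right)
  finally show ?thesis .
qed

lemma gexp_meas_real[measurable]:
  "(\<lambda>x. gexp n L b x) \<in> borel_measurable (Pi\<^sub>M I (\<lambda>_. (lborel::complex measure)))"
  if "{..<n} \<subseteq> I"
proof -
  have c[measurable]: "(\<lambda>x. x j) \<in> borel_measurable (Pi\<^sub>M I (\<lambda>_. (lborel::complex measure)))" if "j < n" for j
    using that \<open>{..<n} \<subseteq> I\<close> measurable_component_singleton[of j I "\<lambda>_. (lborel::complex measure)"]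
    by (auto simp: measurable_lborel1)
  have "(\<lambda>x. \<Sum>j<n. L i j * x j) \<in> borel_measurable (Pi\<^sub>M I (\<lambda>_. (lborel::complex measure)))" for i
    by (intro borel_measurable_sum borel_measurable_times borel_measurable_const c) auto
  then have [measurable]: "(\<lambda>x. (cmod (\<Sum>j<n. L i j * x j))\<^sup>2) \<in> borel_measurable (Pi\<^sub>M I (\<lambda>_. (lborel::complex measure)))" for i
    by measurable
  have [measurable]: "(\<lambda>x. 2 * Re (cnj (b j) * x j)) \<in> borel_measurable (Pi\<^sub>M I (\<lambda>_. (lborel::complex measure)))" if "j < n" for j
    using c[OF that] by measurable
  show ?thesis unfolding gexp_def by measurable
qed

lemma gauss_int:
  fixes L :: "nat \<Rightarrow> nat \<Rightarrow> complex"
  assumes "\<forall>i j. i < j \<longrightarrow> j < n \<longrightarrow> L i j = 0"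
    and "\<forall>i<n. L i i \<noteq> 0"
    and "\<forall>j<n. b j = (\<Sum>i<n. cnj (L i j) * c i)"
    and K: "K \<ge> 0"
  shows "(\<integral>x. K * exp (gexp n L b x) \<partial>cvec_measure n)
    = K * (pi ^ n / (\<Prod>i<n. (cmod (L i i))\<^sup>2) * exp (\<Sum>i<n. (cmod (c i))\<^sup>2))"
proof -
  have m: "(\<lambda>x. K * exp (gexp n L b x)) \<in> borel_measurable (cvec_measure n)"
    unfolding cvec_measure_def by (intro borel_measurable_times borel_measurable_const borel_measurable_exp[THEN measurable_compose] gexp_meas_real) auto
  have "(\<integral>x. K * exp (gexp n L b x) \<partial>cvec_measure n) = enn2real (\<integral>\<^sup>+x. ennreal (K * exp (gexp n L b x)) \<partial>cvec_measure n)"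
    by (rule integral_eq_nn_integral) (use K m in auto)
  also have "(\<integral>\<^sup>+x. ennreal (K * exp (gexp n L b x)) \<partial>cvec_measure n) = ennreal K * (\<integral>\<^sup>+x. ennreal (exp (gexp n L b x)) \<partial>cvec_measure n)"
    using K by (subst nn_integral_cmult[symmetric]) (auto simp: ennreal_mult' cvec_measure_def intro: gexp_meas)
  also have "\<dots> = ennreal K * ennreal (pi ^ n / (\<Prod>i<n. (cmod (L i i))\<^sup>2) * exp (\<Sum>i<n. (cmod (c i))\<^sup>2))"
    by (simp only: gaussB[OF assms(1-3)])
  finally show ?thesis using K by (simp add: enn2real_mult prod_nonneg)
qed

context
  fixes Nr Nt \<nu> :: nat and H Qa La :: "complex mat" and Es N0 :: real
  assumes HC: "H \<in> carrier_mat Nr Nt" and Es: "Es > 0" and N0: "N0 > 0"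
    and QC: "Qa \<in> carrier_mat (Nr + Nt) Nt" and QQ: "mat_adjoint Qa * Qa = 1\<^sub>m Nt"
    and LC: "La \<in> carrier_mat Nt Nt" and Llt: "\<forall>i<Nt. \<forall>j<Nt. i < j \<longrightarrow> La $$ (i,j) = 0"
    and Ldg: "\<forall>i<Nt. Im (La $$ (i,i)) = 0 \<and> Re (La $$ (i,i)) > 0"
    and QL: "aug_mat H N0 Es Nr Nt = Qa * La"
    and nuN: "\<nu> \<le> Nt"
begin

lemmas ctx = HC Es N0 QC QQ LC Llt Ldg QL nuN

abbreviation "LL \<equiv> Lap Nt \<nu> La"
abbreviation "GG \<equiv> Gm Nt \<nu> La"
abbreviation "WW \<equiv> Wm Nt H Es N0"
abbreviation "KK \<equiv> Km Nt \<nu> H La Es N0"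
abbreviation "FF \<equiv> mat_adjoint WW * GG"
abbreviation "Pd \<equiv> (\<Prod>i<Nt. (cmod (LL $$ (i,i)))\<^sup>2)"

lemma LLc: "LL \<in> carrier_mat Nt Nt" by (rule Lap_carrier[OF ctx])
lemma GGc: "GG \<in> carrier_mat Nt Nt" by (rule Gm_carrier[OF ctx])
lemma WWc: "WW \<in> carrier_mat Nt Nr" by (rule Wm_carrier[OF ctx])
lemma KKc: "KK \<in> carrier_mat Nt Nr" unfolding Km_def[OF ctx] using LLc WWc by auto
lemma FFc: "FF \<in> carrier_mat Nr Nt" using GGc WWc by auto

lemma GG_idx: "j < Nt \<Longrightarrow> k < Nt \<Longrightarrow> GG $$ (j,k) = (\<Sum>i<Nt. cnj (LL $$ (i,j)) * LL $$ (i,k))"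
  unfolding Gm_def[OF ctx] using LLc by (simp add: scalar_prod_def atLeast0LessThan)

lemma adjFF: "mat_adjoint FF = mat_adjoint LL * KK"
  unfolding Km_def[OF ctx] using GGc WWc LLc
  by (simp add: adj_mult' Gm_herm[OF ctx]) (simp add: Gm_def[OF ctx] massoc)

lemma cond_times_gauss:
  assumes y: "y \<in> carrier_vec Nr"
  shows "p_ap_cond FF GG Es y (vec Nt x) * cgauss_density Nt Es x
    = (1 / (pi * Es) ^ Nt) * exp (gexp Nt (\<lambda>i j. LL $$ (i,j)) (\<lambda>j. \<Sum>i<Nr. cnj (FF $$ (i,j)) * y $ i) x)"
proof -
  define S where "S = (\<Sum>i<Nt. (cmod (x i))\<^sup>2)"
  have t1: "2 * Re (conjugate y \<bullet> (FF *\<^sub>v vec Nt x)) = (\<Sum>j<Nt. 2 * Re (cnj (\<Sum>i<Nr. cnj (FF $$ (i,j)) * y $ i) * x j))"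
  proof -
    have "conjugate y \<bullet> (FF *\<^sub>v vec Nt x) = (\<Sum>i<Nr. cnj (y $ i) * (\<Sum>k<Nt. FF $$ (i,k) * x k))"
      using y FFc by (simp add: VL1[of _ Nr] VL2[OF FFc])
    also have "\<dots> = (\<Sum>k<Nt. \<Sum>i<Nr. cnj (y $ i) * FF $$ (i,k) * x k)"
      by (simp add: sum_distrib_left mult.assoc) (rule sum.swap)
    also have "\<dots> = (\<Sum>k<Nt. cnj (\<Sum>i<Nr. cnj (FF $$ (i,k)) * y $ i) * x k)"
      by (simp add: cnj_sum sum_distrib_left sum_distrib_right mult.commute mult.left_commute)
    finally show ?thesis by (simp add: Re_sum sum_distrib_left)
  qed
  have t2: "Re (conjugate (vec Nt x) \<bullet> (GG *\<^sub>v vec Nt x)) = (\<Sum>i<Nt. (cmod (\<Sum>j<Nt. LL $$ (i,j) * x j))\<^sup>2)"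
  proof -
    have "conjugate (vec Nt x) \<bullet> (GG *\<^sub>v vec Nt x) = (\<Sum>j<Nt. cnj (x j) * (\<Sum>k<Nt. GG $$ (j,k) * x k))"
      using GGc by (simp add: VL1[of _ Nt] scalar_prod_def atLeast0LessThan)
    also have "\<dots> = (\<Sum>j<Nt. \<Sum>k<Nt. (\<Sum>i<Nt. cnj (LL $$ (i,j)) * LL $$ (i,k)) * (cnj (x j) * x k))"
      by (intro sum.cong refl) (simp add: sum_distrib_left GG_idx algebra_simps)
    also have "\<dots> = (\<Sum>i<Nt. cnj (\<Sum>j<Nt. LL $$ (i,j) * x j) * (\<Sum>k<Nt. LL $$ (i,k) * x k))"
      by (rule SQ[symmetric])
    also have "\<dots> = complex_of_real (\<Sum>i<Nt. (cmod (\<Sum>j<Nt. LL $$ (i,j) * x j))\<^sup>2)"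
      by (simp add: complex_norm_square mult.commute del: of_real_power)
    finally show ?thesis by simp
  qed
  have t3: "Re (conjugate (vec Nt x) \<bullet> vec Nt x) = S"
  proof -
    have "conjugate (vec Nt x) \<bullet> vec Nt x = (\<Sum>j<Nt. cnj (x j) * x j)" by (simp add: VL1[of _ Nt])
    also have "\<dots> = complex_of_real S" unfolding S_def
      by (simp add: complex_norm_square mult.commute del: of_real_power)
    finally show ?thesis by simp
  qed
  have g: "cgauss_density Nt Es x = exp (- S / Es) / (pi * Es) ^ Nt"
    unfolding cgauss_density_def S_def ..
  show ?thesis
    unfolding p_ap_cond_def t1 t2 t3 g gexp_def
    by (simp add: exp_diff exp_add exp_minus field_simps)
qed

lemma bc_rel:
  assumes y: "y \<in> carrier_vec Nr" and j: "j < Nt"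
  shows "(\<Sum>i<Nr. cnj (FF $$ (i,j)) * y $ i) = (\<Sum>i<Nt. cnj (LL $$ (i,j)) * (KK *\<^sub>v y) $ i)"
proof -
  have "(\<Sum>i<Nt. cnj (LL $$ (i,j)) * (KK *\<^sub>v y) $ i) = (\<Sum>i<Nt. cnj (LL $$ (i,j)) * (\<Sum>l<Nr. KK $$ (i,l) * y $ l))"
    using KKc y by (intro sum.cong refl) (simp add: scalar_prod_def atLeast0LessThan)
  also have "\<dots> = (\<Sum>l<Nr. (\<Sum>i<Nt. cnj (LL $$ (i,j)) * KK $$ (i,l)) * y $ l)"
    by (simp add: sum_distrib_left sum_distrib_right mult.assoc) (rule sum.swap)
  also have "\<dots> = (\<Sum>l<Nr. (mat_adjoint LL * KK) $$ (j,l) * y $ l)"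
    using LLc KKc j by (intro sum.cong refl) (simp add: scalar_prod_def atLeast0LessThan)
  also have "\<dots> = (\<Sum>l<Nr. (mat_adjoint FF) $$ (j,l) * y $ l)" unfolding adjFF ..
  also have "\<dots> = (\<Sum>i<Nr. cnj (FF $$ (i,j)) * y $ i)"
    using FFc GGc WWc j by (intro sum.cong refl) simp
  finally show ?thesis by simp
qed

lemma marg_closed:
  assumes y: "y \<in> carrier_vec Nr"
  shows "p_ap_marg FF GG Es Nt y = exp (\<Sum>i<Nt. (cmod ((KK *\<^sub>v y) $ i))\<^sup>2) / (Es ^ Nt * Pd)"
proof -
  have "p_ap_marg FF GG Es Nt y = (\<integral>x. (1 / (pi * Es) ^ Nt) * exp (gexp Nt (\<lambda>i j. LL $$ (i,j)) (\<lambda>j. \<Sum>i<Nr. cnj (FF $$ (i,j)) * y $ i) x) \<partial>cvec_measure Nt)"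
    unfolding p_ap_marg_def by (rule Bochner_Integration.integral_cong[OF refl]) (rule cond_times_gauss[OF y])
  also have "\<dots> = (1 / (pi * Es) ^ Nt) * (pi ^ Nt / Pd * exp (\<Sum>i<Nt. (cmod ((KK *\<^sub>v y) $ i))\<^sup>2))"
  proof (rule gauss_int)
    show "\<forall>i j. i < j \<longrightarrow> j < Nt \<longrightarrow> LL $$ (i,j) = 0" using Lap_lt[OF ctx] by blast
    show "\<forall>i<Nt. LL $$ (i,i) \<noteq> 0" using Lap_dg[OF ctx] by blast
    show "\<forall>j<Nt. (\<Sum>i<Nr. cnj (FF $$ (i,j)) * y $ i) = (\<Sum>i<Nt. cnj (LL $$ (i,j)) * (KK *\<^sub>v y) $ i)"
      using bc_rel[OF y] by blast
    show "0 \<le> 1 / (pi * Es) ^ Nt" using Es by simp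
  qed
  also have "\<dots> = exp (\<Sum>i<Nt. (cmod ((KK *\<^sub>v y) $ i))\<^sup>2) / (Es ^ Nt * Pd)"
    using Es by (simp add: power_mult_distrib field_simps)
  finally show ?thesis .
qed

lemma ln_marg:
  assumes y: "y \<in> carrier_vec Nr"
  shows "ln (p_ap_marg FF GG Es Nt y) = (\<Sum>i<Nt. (cmod ((KK *\<^sub>v y) $ i))\<^sup>2) - (real Nt * ln Es + ln Pd)"
proof -
  have Pd: "Pd > 0" by (rule detG_pos[OF ctx])
  have p: "Es ^ Nt * Pd > 0" using Es Pd by simp
  have "ln (exp (\<Sum>i<Nt. (cmod ((KK *\<^sub>v y) $ i))\<^sup>2) / (Es ^ Nt * Pd))
      = ln (exp (\<Sum>i<Nt. (cmod ((KK *\<^sub>v y) $ i))\<^sup>2)) - ln (Es ^ Nt * Pd)"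
    by (rule ln_divide_pos) (use p in auto)
  also have "ln (Es ^ Nt * Pd) = ln (Es ^ Nt) + ln Pd" by (rule ln_mult_pos) (use Es Pd in auto)
  also have "ln (Es ^ Nt) = real Nt * ln Es" by (rule ln_realpow)
  finally show ?thesis unfolding marg_closed[OF y] by simp
qed

abbreviation "yv x z \<equiv> H *\<^sub>v vec Nt x + vec Nr z"

lemma yv_carrier: "yv x z \<in> carrier_vec Nr" using HC by auto

lemma yv_idx: "i < Nr \<Longrightarrow> yv x z $ i = (\<Sum>k<Nt. H $$ (i,k) * x k) + z i"
  using HC by (simp add: row_vec)

lemma inner1:
  "(\<integral>z. ln (p_ap_cond FF GG Es (yv x z) (vec Nt x)) * cgauss_density Nr N0 z \<partial>cvec_measure Nr)
   = 2 * Re (\<Sum>i<Nr. cnj (\<Sum>k<Nt. H $$ (i,k) * x k) * (\<Sum>k<Nt. FF $$ (i,k) * x k))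
     - Re (conjugate (vec Nt x) \<bullet> (GG *\<^sub>v vec Nt x)) + Re (conjugate (vec Nt x) \<bullet> vec Nt x) / Es"
proof -
  define hx where "hx i = (\<Sum>k<Nt. H $$ (i,k) * x k)" for i
  define fx where "fx i = (\<Sum>k<Nt. FF $$ (i,k) * x k)" for i
  define d where "d = 2 * (\<Sum>i<Nr. cnj (hx i) * fx i) - conjugate (vec Nt x) \<bullet> (GG *\<^sub>v vec Nt x)
      + (conjugate (vec Nt x) \<bullet> vec Nt x) / complex_of_real Es"
  have pt: "ln (p_ap_cond FF GG Es (yv x z) (vec Nt x)) = Re (qform Nr (\<lambda>_ _. 0) (\<lambda>_. 0) (\<lambda>i. 2 * fx i) d z)" for z
  proof -
    have "conjugate (yv x z) \<bullet> (FF *\<^sub>v vec Nt x) = (\<Sum>i<Nr. cnj (hx i + z i) * fx i)"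
      using yv_carrier FFc by (simp add: VL1[of _ Nr] yv_idx hx_def fx_def VL2[OF FFc] del: index_add_vec)
    also have "\<dots> = (\<Sum>i<Nr. cnj (hx i) * fx i) + (\<Sum>i<Nr. fx i * cnj (z i))"
      by (simp add: sum.distrib algebra_simps)
    finally have e: "conjugate (yv x z) \<bullet> (FF *\<^sub>v vec Nt x) = (\<Sum>i<Nr. cnj (hx i) * fx i) + (\<Sum>i<Nr. fx i * cnj (z i))" .
    show ?thesis
      unfolding p_ap_cond_def ln_exp qform_def[OF N0] d_def e
      by (simp add: sum_distrib_left mult.assoc Re_divide_of_real)
  qed
  have "(\<integral>z. ln (p_ap_cond FF GG Es (yv x z) (vec Nt x)) * cgauss_density Nr N0 z \<partial>cvec_measure Nr)
      = (\<integral>z. Re (qform Nr (\<lambda>_ _. 0) (\<lambda>_. 0) (\<lambda>i. 2 * fx i) d z) * cgauss_density Nr N0 z \<partial>cvec_measure Nr)"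
    unfolding pt ..
  also have "\<dots> = Re (complex_of_real N0 * (\<Sum>i<Nr. 0) + d)"
    by (rule qform_int_Re(2)[OF N0])
  also have "\<dots> = 2 * Re (\<Sum>i<Nr. cnj (\<Sum>k<Nt. H $$ (i,k) * x k) * (\<Sum>k<Nt. FF $$ (i,k) * x k))
     - Re (conjugate (vec Nt x) \<bullet> (GG *\<^sub>v vec Nt x)) + Re (conjugate (vec Nt x) \<bullet> vec Nt x) / Es"
    unfolding d_def hx_def fx_def by (simp add: Re_divide_of_real)
  finally show ?thesis .
qed

lemma qf_HF: "(\<Sum>i<Nr. cnj (\<Sum>k<Nt. H $$ (i,k) * x k) * (\<Sum>k<Nt. FF $$ (i,k) * x k))
    = (\<Sum>j<Nt. \<Sum>k<Nt. (mat_adjoint H * FF) $$ (j,k) * (cnj (x j) * x k))"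
  unfolding SQ using HC FFc GGc WWc by (intro sum.cong refl) (simp add: scalar_prod_def atLeast0LessThan)

lemma qf_G: "conjugate (vec Nt x) \<bullet> (GG *\<^sub>v vec Nt x) = (\<Sum>j<Nt. \<Sum>k<Nt. GG $$ (j,k) * (cnj (x j) * x k))"
  using GGc by (simp add: VL1[of _ Nt] row_vec sum_distrib_left algebra_simps)

lemma qf_I: "conjugate (vec Nt x) \<bullet> vec Nt x = (\<Sum>j<Nt. \<Sum>k<Nt. (if j = k then 1 else 0) * (cnj (x j) * x k))"
proof -
  have "(\<Sum>k<Nt. (if j = k then 1 else 0) * (cnj (x j) * x k)) = cnj (x j) * x j" if "j < Nt" for j
  proof -
    have "(\<Sum>k<Nt. (if j = k then 1 else 0) * (cnj (x j) * x k)) = (\<Sum>k<Nt. if k = j then cnj (x j) * x j else 0)"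
      by (rule sum.cong) auto
    then show ?thesis using that by simp
  qed
  then show ?thesis by (simp add: VL1[of _ Nt])
qed

lemma outer1:
  "(\<integral>x. (\<integral>z. ln (p_ap_cond FF GG Es (yv x z) (vec Nt x)) * cgauss_density Nr N0 z \<partial>cvec_measure Nr)
        * cgauss_density Nt Es x \<partial>cvec_measure Nt)
   = Es * Re (2 * mtr Nt (mat_adjoint H * FF) - mtr Nt GG) + real Nt"
proof -
  define A1 where "A1 j k = 2 * (mat_adjoint H * FF) $$ (j,k) - GG $$ (j,k) + (if j = k then 1 else 0) / complex_of_real Es" for j k
  have pt: "2 * Re (\<Sum>i<Nr. cnj (\<Sum>k<Nt. H $$ (i,k) * x k) * (\<Sum>k<Nt. FF $$ (i,k) * x k))
     - Re (conjugate (vec Nt x) \<bullet> (GG *\<^sub>v vec Nt x)) + Re (conjugate (vec Nt x) \<bullet> vec Nt x) / Es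
     = Re (qform Nt A1 (\<lambda>_. 0) (\<lambda>_. 0) 0 x)" for x
  proof -
    have "complex_of_real 2 * (\<Sum>j<Nt. \<Sum>k<Nt. (mat_adjoint H * FF) $$ (j,k) * (cnj (x j) * x k))
       - (\<Sum>j<Nt. \<Sum>k<Nt. GG $$ (j,k) * (cnj (x j) * x k))
       + (\<Sum>j<Nt. \<Sum>k<Nt. (if j = k then 1 else 0) * (cnj (x j) * x k)) / complex_of_real Es
       = (\<Sum>j<Nt. \<Sum>k<Nt. A1 j k * (cnj (x j) * x k))"
      unfolding A1_def
      by (simp add: sum_distrib_left sum_divide_distrib sum_subtractf[symmetric] sum.distrib[symmetric] algebra_simps)
    then have "Re (complex_of_real 2 * (\<Sum>j<Nt. \<Sum>k<Nt. (mat_adjoint H * FF) $$ (j,k) * (cnj (x j) * x k))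
       - (\<Sum>j<Nt. \<Sum>k<Nt. GG $$ (j,k) * (cnj (x j) * x k))
       + (\<Sum>j<Nt. \<Sum>k<Nt. (if j = k then 1 else 0) * (cnj (x j) * x k)) / complex_of_real Es)
       = Re (qform Nt A1 (\<lambda>_. 0) (\<lambda>_. 0) 0 x)"
      unfolding qform_def[OF Es] by simp
    then show ?thesis unfolding qf_HF qf_G qf_I by (simp add: Re_divide_of_real)
  qed
  have "(\<integral>x. (\<integral>z. ln (p_ap_cond FF GG Es (yv x z) (vec Nt x)) * cgauss_density Nr N0 z \<partial>cvec_measure Nr)
        * cgauss_density Nt Es x \<partial>cvec_measure Nt)
     = (\<integral>x. Re (qform Nt A1 (\<lambda>_. 0) (\<lambda>_. 0) 0 x) * cgauss_density Nt Es x \<partial>cvec_measure Nt)"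
    unfolding inner1 pt ..
  also have "\<dots> = Re (complex_of_real Es * (\<Sum>j<Nt. A1 j j) + 0)"
    by (rule qform_int_Re(2)[OF Es])
  also have "\<dots> = Es * Re (2 * mtr Nt (mat_adjoint H * FF) - mtr Nt GG) + real Nt"
  proof -
    have "(\<Sum>j<Nt. A1 j j) = 2 * mtr Nt (mat_adjoint H * FF) - mtr Nt GG + of_nat Nt / complex_of_real Es"
      unfolding A1_def mtr_def by (simp add: sum.distrib sum_subtractf sum_distrib_left)
    then have "Re (complex_of_real Es * (\<Sum>j<Nt. A1 j j) + 0)
       = Re (complex_of_real Es * (2 * mtr Nt (mat_adjoint H * FF) - mtr Nt GG + of_nat Nt / complex_of_real Es))"
      by simp
    also have "\<dots> = Es * Re (2 * mtr Nt (mat_adjoint H * FF) - mtr Nt GG) + real Nt"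
      using Es by (simp add: distrib_left Re_divide_of_real)
    finally show ?thesis .
  qed
  finally show ?thesis .
qed

abbreviation "C0 \<equiv> real Nt * ln Es + ln Pd"

lemma KK_yv: "i < Nt \<Longrightarrow> (KK *\<^sub>v yv x z) $ i
    = (\<Sum>l<Nr. KK $$ (i,l) * (\<Sum>k<Nt. H $$ (l,k) * x k)) + (\<Sum>l<Nr. KK $$ (i,l) * z l)"
  using KKc yv_carrier[of x z]
  by (simp add: scalar_prod_def atLeast0LessThan yv_idx sum.distrib distrib_left del: index_add_vec)

lemma inner2:
  "(\<integral>z. ln (p_ap_marg FF GG Es Nt (yv x z)) * cgauss_density Nr N0 z \<partial>cvec_measure Nr)
   = N0 * Re (mtr Nr (mat_adjoint KK * KK))
     + Re (\<Sum>i<Nt. cnj (\<Sum>l<Nr. KK $$ (i,l) * (\<Sum>k<Nt. H $$ (l,k) * x k)) * (\<Sum>l<Nr. KK $$ (i,l) * (\<Sum>k<Nt. H $$ (l,k) * x k)))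
     - C0"
proof -
  define a where "a i = (\<Sum>l<Nr. KK $$ (i,l) * (\<Sum>k<Nt. H $$ (l,k) * x k))" for i
  define A where "A l l' = (mat_adjoint KK * KK) $$ (l,l')" for l l'
  define c where "c l = (\<Sum>i<Nt. cnj (a i) * KK $$ (i,l))" for l
  define e where "e l = (\<Sum>i<Nt. cnj (KK $$ (i,l)) * a i)" for l
  define d where "d = (\<Sum>i<Nt. cnj (a i) * a i) - complex_of_real C0"
  have pt: "ln (p_ap_marg FF GG Es Nt (yv x z)) = Re (qform Nr A c e d z)" for z
  proof -
    define b where "b i = (\<Sum>l<Nr. KK $$ (i,l) * z l)" for i
    have "(\<Sum>i<Nt. (cmod ((KK *\<^sub>v yv x z) $ i))\<^sup>2) = Re (\<Sum>i<Nt. cnj (a i + b i) * (a i + b i))"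
    proof -
      have "(\<Sum>i<Nt. (cmod ((KK *\<^sub>v yv x z) $ i))\<^sup>2) = (\<Sum>i<Nt. (cmod (a i + b i))\<^sup>2)"
        by (intro sum.cong refl) (simp add: KK_yv a_def b_def)
      also have "\<dots> = Re (\<Sum>i<Nt. cnj (a i + b i) * (a i + b i))"
        by (simp only: Re_sum norm_sq_Re)
      finally show ?thesis .
    qed
    also have "(\<Sum>i<Nt. cnj (a i + b i) * (a i + b i))
       = (\<Sum>i<Nt. cnj (a i) * a i) + (\<Sum>i<Nt. cnj (a i) * b i) + (\<Sum>i<Nt. cnj (b i) * a i) + (\<Sum>i<Nt. cnj (b i) * b i)"
      by (simp add: sum.distrib algebra_simps)
    also have "(\<Sum>i<Nt. cnj (a i) * b i) = (\<Sum>l<Nr. c l * z l)"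
    proof -
      have "(\<Sum>i<Nt. cnj (a i) * b i) = (\<Sum>i<Nt. \<Sum>l<Nr. cnj (a i) * KK $$ (i,l) * z l)"
        unfolding b_def by (simp add: sum_distrib_left mult.assoc)
      also have "\<dots> = (\<Sum>l<Nr. \<Sum>i<Nt. cnj (a i) * KK $$ (i,l) * z l)" by (rule sum.swap)
      also have "\<dots> = (\<Sum>l<Nr. c l * z l)" unfolding c_def by (simp add: sum_distrib_right)
      finally show ?thesis .
    qed
    also have "(\<Sum>i<Nt. cnj (b i) * a i) = (\<Sum>l<Nr. e l * cnj (z l))"
    proof -
      have "(\<Sum>i<Nt. cnj (b i) * a i) = (\<Sum>i<Nt. \<Sum>l<Nr. cnj (KK $$ (i,l)) * a i * cnj (z l))"
        unfolding b_def by (simp add: cnj_sum sum_distrib_right sum_distrib_left algebra_simps)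
      also have "\<dots> = (\<Sum>l<Nr. \<Sum>i<Nt. cnj (KK $$ (i,l)) * a i * cnj (z l))" by (rule sum.swap)
      also have "\<dots> = (\<Sum>l<Nr. e l * cnj (z l))" unfolding e_def by (simp add: sum_distrib_right)
      finally show ?thesis .
    qed
    also have "(\<Sum>i<Nt. cnj (b i) * b i) = (\<Sum>l<Nr. \<Sum>l'<Nr. A l l' * (cnj (z l) * z l'))"
      unfolding b_def SQ A_def using KKc by (intro sum.cong refl) (simp add: scalar_prod_def atLeast0LessThan)
    finally have "(\<Sum>i<Nt. (cmod ((KK *\<^sub>v yv x z) $ i))\<^sup>2) = Re ((\<Sum>i<Nt. cnj (a i) * a i) + (\<Sum>l<Nr. c l * z l) + (\<Sum>l<Nr. e l * cnj (z l)) + (\<Sum>l<Nr. \<Sum>l'<Nr. A l l' * (cnj (z l) * z l')))" .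
    then show ?thesis unfolding ln_marg[OF yv_carrier] qform_def[OF N0] d_def by simp
  qed
  have "(\<integral>z. ln (p_ap_marg FF GG Es Nt (yv x z)) * cgauss_density Nr N0 z \<partial>cvec_measure Nr)
      = (\<integral>z. Re (qform Nr A c e d z) * cgauss_density Nr N0 z \<partial>cvec_measure Nr)"
    unfolding pt ..
  also have "\<dots> = Re (complex_of_real N0 * (\<Sum>l<Nr. A l l) + d)"
    by (rule qform_int_Re(2)[OF N0])
  also have "\<dots> = N0 * Re (mtr Nr (mat_adjoint KK * KK)) + Re (\<Sum>i<Nt. cnj (a i) * a i) - C0"
    unfolding A_def d_def mtr_def by simp
  finally show ?thesis unfolding a_def .
qed

lemma outer2:
  "(\<integral>x. (\<integral>z. ln (p_ap_marg FF GG Es Nt (yv x z)) * cgauss_density Nr N0 z \<partial>cvec_measure Nr)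
        * cgauss_density Nt Es x \<partial>cvec_measure Nt)
   = Es * Re (mtr Nt (mat_adjoint (KK * H) * (KK * H))) + N0 * Re (mtr Nr (mat_adjoint KK * KK)) - C0"
proof -
  define A2 where "A2 j k = (mat_adjoint (KK * H) * (KK * H)) $$ (j,k)" for j k
  define d2 where "d2 = complex_of_real N0 * mtr Nr (mat_adjoint KK * KK) - complex_of_real C0"
  have pt: "N0 * Re (mtr Nr (mat_adjoint KK * KK))
     + Re (\<Sum>i<Nt. cnj (\<Sum>l<Nr. KK $$ (i,l) * (\<Sum>k<Nt. H $$ (l,k) * x k)) * (\<Sum>l<Nr. KK $$ (i,l) * (\<Sum>k<Nt. H $$ (l,k) * x k)))
     - C0 = Re (qform Nt A2 (\<lambda>_. 0) (\<lambda>_. 0) d2 x)" for x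
  proof -
    have kh: "(\<Sum>l<Nr. KK $$ (i,l) * (\<Sum>k<Nt. H $$ (l,k) * x k)) = (\<Sum>k<Nt. (KK * H) $$ (i,k) * x k)" if "i < Nt" for i
    proof -
      have "(\<Sum>l<Nr. KK $$ (i,l) * (\<Sum>k<Nt. H $$ (l,k) * x k)) = (\<Sum>k<Nt. (\<Sum>l<Nr. KK $$ (i,l) * H $$ (l,k)) * x k)"
        by (simp add: sum_distrib_left sum_distrib_right mult.assoc) (rule sum.swap)
      also have "\<dots> = (\<Sum>k<Nt. (KK * H) $$ (i,k) * x k)"
        using KKc HC that by (intro sum.cong refl) (simp add: scalar_prod_def atLeast0LessThan)
      finally show ?thesis .
    qed
    have "(\<Sum>i<Nt. cnj (\<Sum>l<Nr. KK $$ (i,l) * (\<Sum>k<Nt. H $$ (l,k) * x k)) * (\<Sum>l<Nr. KK $$ (i,l) * (\<Sum>k<Nt. H $$ (l,k) * x k)))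
       = (\<Sum>i<Nt. cnj (\<Sum>k<Nt. (KK * H) $$ (i,k) * x k) * (\<Sum>k<Nt. (KK * H) $$ (i,k) * x k))"
      by (intro sum.cong refl) (simp add: kh)
    also have "\<dots> = (\<Sum>j<Nt. \<Sum>k<Nt. A2 j k * (cnj (x j) * x k))"
      unfolding SQ A2_def using KKc HC by (intro sum.cong refl) (simp add: scalar_prod_def atLeast0LessThan)
    finally have e: "(\<Sum>i<Nt. cnj (\<Sum>l<Nr. KK $$ (i,l) * (\<Sum>k<Nt. H $$ (l,k) * x k)) * (\<Sum>l<Nr. KK $$ (i,l) * (\<Sum>k<Nt. H $$ (l,k) * x k)))
       = (\<Sum>j<Nt. \<Sum>k<Nt. A2 j k * (cnj (x j) * x k))" .
    show ?thesis unfolding e qform_def[OF Es] d2_def by simp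
  qed
  have "(\<integral>x. (\<integral>z. ln (p_ap_marg FF GG Es Nt (yv x z)) * cgauss_density Nr N0 z \<partial>cvec_measure Nr)
        * cgauss_density Nt Es x \<partial>cvec_measure Nt)
     = (\<integral>x. Re (qform Nt A2 (\<lambda>_. 0) (\<lambda>_. 0) d2 x) * cgauss_density Nt Es x \<partial>cvec_measure Nt)"
    unfolding inner2 pt ..
  also have "\<dots> = Re (complex_of_real Es * (\<Sum>j<Nt. A2 j j) + d2)"
    by (rule qform_int_Re(2)[OF Es])
  also have "\<dots> = Es * Re (mtr Nt (mat_adjoint (KK * H) * (KK * H))) + N0 * Re (mtr Nr (mat_adjoint KK * KK)) - C0"
    unfolding A2_def d2_def mtr_def by simp
  finally show ?thesis .
qed

lemma final_ctx:
  "(\<integral>x. (\<integral>z. ln (p_ap_cond FF GG Es (yv x z) (vec Nt x)) * cgauss_density Nr N0 z \<partial>cvec_measure Nr)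
        * cgauss_density Nt Es x \<partial>cvec_measure Nt)
   - (\<integral>x. (\<integral>z. ln (p_ap_marg FF GG Es Nt (yv x z)) * cgauss_density Nr N0 z \<partial>cvec_measure Nr)
        * cgauss_density Nt Es x \<partial>cvec_measure Nt)
   = real Nt * ln Es + ln (Re (det GG))"
proof -
  have T: "mat_adjoint H * FF = Tm Nt \<nu> H La Es N0" unfolding Tm_def[OF ctx] ..
  have F5: "Re (complex_of_real Es * (mtr Nt GG - cnj (mtr Nt (Tm Nt \<nu> H La Es N0)) - mtr Nt (Tm Nt \<nu> H La Es N0)
      + mtr Nt (mat_adjoint (KK * H) * (KK * H))) + complex_of_real N0 * mtr Nr (mat_adjoint KK * KK)) = real Nt"
    using arg_cong[OF F5_complex[OF ctx], of Re] by simp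
  have dG: "Re (det GG) = Pd" unfolding detG[OF ctx] by (simp only: Re_complex_of_real)
  show ?thesis unfolding outer1 outer2 T dG using F5 by (simp add: algebra_simps)
qed

end

theorem theorem2:
  fixes Nr Nt \<nu> :: nat and H Qa La :: "complex mat" and Es N0 :: real
  assumes "2 \<le> Nt" and "Nt \<le> Nr"
    and "H \<in> carrier_mat Nr Nt"
    and "Es > 0" and "N0 > 0"
    and "Qa \<in> carrier_mat (Nr + Nt) Nt" and "mat_adjoint Qa * Qa = 1\<^sub>m Nt"
    and "La \<in> carrier_mat Nt Nt"
    and "\<forall>i<Nt. \<forall>j<Nt. i < j \<longrightarrow> La $$ (i,j) = 0"
    and "\<forall>i<Nt. Im (La $$ (i,i)) = 0 \<and> Re (La $$ (i,i)) > 0"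
    and "aug_mat H N0 Es Nr Nt = Qa * La"
    and "1 \<le> \<nu>" and "\<nu> \<le> Nt - 1"
  shows
    "(let Lap = L_ap La Nt \<nu>;
          G = mat_adjoint Lap * Lap;
          F = mat_adjoint (W_MMSE H (N0 / Es) Nt) * G;
          yv = (\<lambda>x z. H *\<^sub>v vec Nt x + vec Nr z)
      in (\<integral>x. (\<integral>z. ln (p_ap_cond F G Es (yv x z) (vec Nt x))
                     * cgauss_density Nr N0 z \<partial>cvec_measure Nr)
                * cgauss_density Nt Es x \<partial>cvec_measure Nt)
       - (\<integral>x. (\<integral>z. ln (p_ap_marg F G Es Nt (yv x z))
                     * cgauss_density Nr N0 z \<partial>cvec_measure Nr)
                * cgauss_density Nt Es x \<partial>cvec_measure Nt)
       = real Nt * ln Es + ln (Re (det G)))"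
proof -
  have nuN: "\<nu> \<le> Nt" using assms(13) by simp
  note ctx = assms(3,4,5,6,7,8,9,10,11) nuN
  have eW: "W_MMSE H (N0 / Es) Nt = Wm Nt H Es N0"
    by (simp add: W_MMSE_def Wm_def[OF ctx] Minv_def[OF ctx])
  have eL: "L_ap La Nt \<nu> = Lap Nt \<nu> La" by (simp add: Lap_def[OF ctx])
  have eG: "mat_adjoint (Lap Nt \<nu> La) * Lap Nt \<nu> La = Gm Nt \<nu> La" by (simp add: Gm_def[OF ctx])
  show ?thesis unfolding Let_def eW eL eG using final_ctx[OF ctx] by simp
qed


end
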